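(* Let $G\in\mathbb{R}^{n\times n}$ and $\overline G:=\Pi_{\mathfrak{B}_n}(G)$. Define $\Theta^G\in\mathbb{R}^{n\times n}$ by $\Theta^G_{ij}=1$ if $\overline G_{ij}=0$ and $\Theta^G_{ij}=0$ otherwise, and the linear operator $\Xi:\mathbb{R}^{n\times n}\to\mathbb{R}^{n\times n}$ by $\Xi(H):=H-\Theta^G\circ H$. Then the linear operator $\mathcal{P}:\mathbb{R}^{n\times n}\to\mathbb{R}^{n\times n}$, \[ \mathcal{P}(H):=\Xi(H)-\Xi\mathcal{B}^*(\mathcal{B}\Xi\mathcal{B}^* )^{\dagger}\mathcal{B}\Xi(H),\qquad H\in\mathbb{R}^{n\times n}, \] is the HS-Jacobian of $\Pi_{\mathfrak{B}_n}$ at $G$. Moreover, $\mathcal{P}$ is self-adjoint and positive semidefinite.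
   Context: $\mathfrak{B}_n:=\{X\in\mathbb{R}^{n\times n}\mid Xe=e,\ X^Te=e,\ X\ge0\}$ is the Birkhoff polytope ($e$ the all-ones vector in $\mathbb{R}^n$, $X\ge0$ entrywise), and $\Pi_{\mathfrak{B}_n}$ is the Euclidean (Frobenius-norm) projection onto it. $\circ$ is the Hadamard product. $\mathcal{B}:\mathbb{R}^{n\times n}\to\mathbb{R}^{2n}$, $\mathcal{B}(X):=[(Xe)^T\ (X^Te)^T]^T$, with adjoint $\mathcal{B}^*$ (w.r.t. the trace inner product), so that $\mathfrak{B}_n=\{X\mid \mathcal{B}X=[e^T\ e^T]^T,\ X\ge0\}$. $\dagger$ denotes the Moore–Penrose pseudo-inverse. HS-Jacobian: for a polyhedral set $D=\{x\in\mathbb{R}^N\mid Ax\ge b,\ Bx=d\}$ and a point $x$, with $I(x)=\{i\mid A_i\Pi_D(x)=b_i\}$ the active inequality indices at $\Pi_D(x)$ and $A_{I(x)}$ the corresponding rows of $A$, the HS-Jacobian of $\Pi_D$ at $x$ is $P_0:=I_N-[A_{I(x)}^T\ B^T]\left(\begin{bmatrix}A_{I(x)}\\ B\end{bmatrix}[A_{I(x)}^T\ B^T]\right)^{\dagger}\begin{bmatrix}A_{I(x)}\\ B\end{bmatrix}$. Here this is applied with $\mathbb{R}^{n\times n}\cong\mathbb{R}^{n^2}$, inequality constraints $X\ge 0$ (i.e., $A$ the identity, $b=0$) and equality constraints $\mathcal{B}X=[e^T\ e^T]^T$. *)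

theory Defs
  imports Complex_Main "Jordan_Normal_Form.Matrix"
begin

definition ones :: "nat \<Rightarrow> real vec" where
  "ones n = vec n (\<lambda>_. 1)"

definition pinv :: "real mat \<Rightarrow> real mat" where
  "pinv A = (THE X. X \<in> carrier_mat (dim_col A) (dim_row A) \<and>
      A * X * A = A \<and> X * A * X = X \<and>
      transpose_mat (A * X) = A * X \<and> transpose_mat (X * A) = X * A)"

definition euclid_proj :: "real vec set \<Rightarrow> real vec \<Rightarrow> real vec" where
  "euclid_proj D x = (THE y. y \<in> D \<and>
      (\<forall>z\<in>D. (x - y) \<bullet> (x - y) \<le> (x - z) \<bullet> (x - z)))"

definition polyhedron :: "real mat \<Rightarrow> real vec \<Rightarrow> real mat \<Rightarrow> real vec \<Rightarrow> real vec set" where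
  "polyhedron A b B d = {x \<in> carrier_vec (dim_col A).
      (\<forall>i<dim_row A. row A i \<bullet> x \<ge> b $ i) \<and> B *\<^sub>v x = d}"

definition active_set :: "real mat \<Rightarrow> real vec \<Rightarrow> real mat \<Rightarrow> real vec \<Rightarrow> real vec \<Rightarrow> nat set" where
  "active_set A b B d x =
     {i. i < dim_row A \<and> row A i \<bullet> euclid_proj (polyhedron A b B d) x = b $ i}"

definition hs_jacobian :: "real mat \<Rightarrow> real vec \<Rightarrow> real mat \<Rightarrow> real vec \<Rightarrow> real vec \<Rightarrow> real mat" where
  "hs_jacobian A b B d x =
     (let C = mat_of_rows (dim_col A)
                (map (row A) (filter (\<lambda>i. i \<in> active_set A b B d x) [0..<dim_row A]) @ rows B)
      in 1\<^sub>m (dim_col A) - transpose_mat C * pinv (C * transpose_mat C) * C)"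

definition frob_inner :: "real mat \<Rightarrow> real mat \<Rightarrow> real" where
  "frob_inner X Y = (\<Sum>i<dim_row X. \<Sum>j<dim_col X. X $$ (i, j) * Y $$ (i, j))"

definition birkhoff :: "nat \<Rightarrow> real mat set" where
  "birkhoff n = {X \<in> carrier_mat n n. X *\<^sub>v ones n = ones n \<and>
      transpose_mat X *\<^sub>v ones n = ones n \<and> (\<forall>i<n. \<forall>j<n. X $$ (i, j) \<ge> 0)}"

definition proj_birkhoff :: "nat \<Rightarrow> real mat \<Rightarrow> real mat" where
  "proj_birkhoff n G = (THE Y. Y \<in> birkhoff n \<and>
      (\<forall>Z\<in>birkhoff n. frob_inner (G - Y) (G - Y) \<le> frob_inner (G - Z) (G - Z)))"

text \<open>Identification R^{n x n} = R^{n^2} (row-major vectorisation) and its inverse.\<close>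
definition vec_of_mat :: "nat \<Rightarrow> real mat \<Rightarrow> real vec" where
  "vec_of_mat n X = vec (n * n) (\<lambda>k. X $$ (k div n, k mod n))"

definition mat_of_vec :: "nat \<Rightarrow> real vec \<Rightarrow> real mat" where
  "mat_of_vec n v = mat n n (\<lambda>(i, j). v $ (i * n + j))"

definition Bop :: "nat \<Rightarrow> real mat \<Rightarrow> real vec" where
  "Bop n X = (X *\<^sub>v ones n) @\<^sub>v (transpose_mat X *\<^sub>v ones n)"

definition Badj :: "nat \<Rightarrow> real vec \<Rightarrow> real mat" where
  "Badj n y = (THE Z. Z \<in> carrier_mat n n \<and>
      (\<forall>X\<in>carrier_mat n n. Bop n X \<bullet> y = frob_inner X Z))"

definition Bmat :: "nat \<Rightarrow> real mat" where
  "Bmat n = mat (2 * n) (n * n) (\<lambda>(r, k). Bop n (mat_of_vec n (unit_vec (n * n) k)) $ r)"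

definition op_mat :: "nat \<Rightarrow> (real vec \<Rightarrow> real vec) \<Rightarrow> real mat" where
  "op_mat m L = mat m m (\<lambda>(i, j). L (unit_vec m j) $ i)"

definition op_pinv :: "nat \<Rightarrow> (real vec \<Rightarrow> real vec) \<Rightarrow> real vec \<Rightarrow> real vec" where
  "op_pinv m L y = pinv (op_mat m L) *\<^sub>v y"

definition Theta :: "nat \<Rightarrow> real mat \<Rightarrow> real mat" where
  "Theta n G = mat n n (\<lambda>(i, j). if proj_birkhoff n G $$ (i, j) = 0 then 1 else 0)"

definition Xi :: "nat \<Rightarrow> real mat \<Rightarrow> real mat \<Rightarrow> real mat" where
  "Xi n G H = H - mat n n (\<lambda>(i, j). Theta n G $$ (i, j) * H $$ (i, j))"

definition Pop :: "nat \<Rightarrow> real mat \<Rightarrow> real mat \<Rightarrow> real mat" where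
  "Pop n G H = Xi n G H -
     Xi n G (Badj n (op_pinv (2 * n) (\<lambda>y. Bop n (Xi n G (Badj n y))) (Bop n (Xi n G H))))"

end

theory Submission
  imports Defs "HOL-Analysis.Function_Topology"
begin

definition penrose :: "real mat \<Rightarrow> real mat \<Rightarrow> bool" where
  "penrose A X \<longleftrightarrow> X \<in> carrier_mat (dim_col A) (dim_row A) \<and>
      A * X * A = A \<and> X * A * X = X \<and>
      transpose_mat (A * X) = A * X \<and> transpose_mat (X * A) = X * A"

lemma penrose_unique:
  assumes A: "A \<in> carrier_mat nr nc" and pX: "penrose A X" and pY: "penrose A Y"
  shows "X = Y"
proof -
  have X: "X \<in> carrier_mat nc nr" and Y: "Y \<in> carrier_mat nc nr"
    using pX pY A unfolding penrose_def by auto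
  note P = pX[unfolded penrose_def] pY[unfolded penrose_def]
  have AT: "A\<^sup>T \<in> carrier_mat nc nr" and XT: "X\<^sup>T \<in> carrier_mat nr nc"
    and YT: "Y\<^sup>T \<in> carrier_mat nr nc" using A X Y by auto
  have e1: "A\<^sup>T = A\<^sup>T * Y\<^sup>T * A\<^sup>T"
  proof -
    have "A\<^sup>T = (A * Y * A)\<^sup>T" using P by simp
    also have "\<dots> = A\<^sup>T * (A * Y)\<^sup>T" by (rule transpose_mult[OF mult_carrier_mat[OF A Y] A])
    also have "\<dots> = A\<^sup>T * (Y\<^sup>T * A\<^sup>T)" by (simp add: transpose_mult[OF A Y])
    finally show ?thesis using AT YT by (simp add: assoc_mult_mat[OF AT YT AT])
  qed
  have e2: "A\<^sup>T = A\<^sup>T * X\<^sup>T * A\<^sup>T"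
  proof -
    have "A\<^sup>T = (A * X * A)\<^sup>T" using P by simp
    also have "\<dots> = A\<^sup>T * (A * X)\<^sup>T" by (rule transpose_mult[OF mult_carrier_mat[OF A X] A])
    also have "\<dots> = A\<^sup>T * (X\<^sup>T * A\<^sup>T)" by (simp add: transpose_mult[OF A X])
    finally show ?thesis using AT XT by (simp add: assoc_mult_mat[OF AT XT AT])
  qed
  have AX: "A * X = X\<^sup>T * A\<^sup>T" using P A X by (metis transpose_mult)
  have AY: "A * Y = Y\<^sup>T * A\<^sup>T" using P A Y by (metis transpose_mult)
  have XA: "X * A = A\<^sup>T * X\<^sup>T" using P A X by (metis transpose_mult)
  have YA: "Y * A = A\<^sup>T * Y\<^sup>T" using P A Y by (metis transpose_mult)
  have "X = X * (A * X)" using P A X by (simp add: assoc_mult_mat[OF X A X])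
  also have "\<dots> = X * (X\<^sup>T * A\<^sup>T)" using AX by simp
  also have "\<dots> = X * (X\<^sup>T * (A\<^sup>T * Y\<^sup>T * A\<^sup>T))" using e1 by simp
  also have "\<dots> = X * ((X\<^sup>T * A\<^sup>T) * (Y\<^sup>T * A\<^sup>T))"
    by (simp add: assoc_mult_mat[OF XT AT mult_carrier_mat[OF YT AT]] assoc_mult_mat[OF AT YT AT])
  also have "\<dots> = X * ((A * X) * (A * Y))" using AX AY by simp
  also have "\<dots> = X * (A * X) * (A * Y)"
    by (rule assoc_mult_mat[OF X mult_carrier_mat[OF A X] mult_carrier_mat[OF A Y], symmetric])
  also have "\<dots> = (X * A * X) * (A * Y)"
    by (simp add: assoc_mult_mat[OF X A X])
  also have "\<dots> = (X * A * X) * A * Y"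
    by (rule assoc_mult_mat[OF mult_carrier_mat[OF mult_carrier_mat[OF X A] X] A Y, symmetric])
  also have "\<dots> = X * A * Y" using P by simp
  finally have 1: "X = X * A * Y" .
  have "Y = (Y * A) * Y" using P by simp
  also have "\<dots> = (A\<^sup>T * Y\<^sup>T) * Y" using YA by simp
  also have "\<dots> = ((A\<^sup>T * X\<^sup>T * A\<^sup>T) * Y\<^sup>T) * Y" using e2 by simp
  also have "\<dots> = ((A\<^sup>T * X\<^sup>T) * (A\<^sup>T * Y\<^sup>T)) * Y"
    by (simp add: assoc_mult_mat[OF mult_carrier_mat[OF AT XT] AT YT])
  also have "\<dots> = ((X * A) * (Y * A)) * Y" using XA YA by simp
  also have "\<dots> = X * A * (Y * A * Y)"
    by (rule assoc_mult_mat[OF mult_carrier_mat[OF X A] mult_carrier_mat[OF Y A] Y])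
  also have "\<dots> = X * A * Y" using P by simp
  finally show ?thesis using 1 by simp
qed

lemma pinv_eq: assumes A: "A \<in> carrier_mat nr nc" and pX: "penrose A X"
  shows "pinv A = X"
proof -
  have "pinv A = (THE X. penrose A X)" unfolding pinv_def penrose_def by simp
  also have "\<dots> = X" using pX penrose_unique[OF A] by (intro the_equality) auto
  finally show ?thesis .
qed


lemma sprod_self_ge0: "(v::real vec) \<bullet> v \<ge> 0"
  unfolding scalar_prod_def by (intro sum_nonneg) auto

lemma sprod_self_eq0: assumes "(v::real vec) \<in> carrier_vec n" "v \<bullet> v = 0" shows "v = 0\<^sub>v n"
proof -
  have "(\<Sum>i\<in>{0..<dim_vec v}. v $ i * v $ i) = 0" using assms(2) unfolding scalar_prod_def by simp
  hence "\<forall>i\<in>{0..<dim_vec v}. v $ i * v $ i = 0" by (subst sum_nonneg_eq_0_iff[symmetric]) auto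
  thus ?thesis using assms(1) by (intro eq_vecI) auto
qed

lemma vec_minus_eq0: assumes "(x::real vec) \<in> carrier_vec n" "y \<in> carrier_vec n" "x - y = 0\<^sub>v n"
  shows "x = y"
proof (rule eq_vecI)
  fix i assume "i < dim_vec y"
  have "(x - y) $ i = (0\<^sub>v n) $ i" by (simp only: assms(3))
  hence "x $ i - y $ i = 0" using assms(1,2) \<open>i < dim_vec y\<close> by simp
  thus "x $ i = y $ i" by simp
qed (use assms in auto)

definition outer :: "real vec \<Rightarrow> real vec \<Rightarrow> real mat" where
  "outer a b = mat (dim_vec a) (dim_vec b) (\<lambda>(i,j). a $ i * b $ j)"

lemma outer_carrier[simp]: "outer a b \<in> carrier_mat (dim_vec a) (dim_vec b)"
  unfolding outer_def by simp

lemma outer_index[simp]: "i < dim_vec a \<Longrightarrow> j < dim_vec b \<Longrightarrow> outer a b $$ (i,j) = a $ i * b $ j"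
  "dim_row (outer a b) = dim_vec a" "dim_col (outer a b) = dim_vec b"
  unfolding outer_def by auto

lemma mult_outer: assumes "C \<in> carrier_mat m (dim_vec a)"
  shows "C * outer a b = outer (C *\<^sub>v a) b"
  using assms by (intro eq_matI) (auto simp: scalar_prod_def sum_distrib_left mult.commute mult.left_commute)

lemma outer_mult: assumes "C \<in> carrier_mat (dim_vec b) p"
  shows "outer a b * C = outer a (C\<^sup>T *\<^sub>v b)"
  using assms by (intro eq_matI) (auto simp: scalar_prod_def sum_distrib_left ac_simps)

lemma outer_mult_vec: assumes "x \<in> carrier_vec (dim_vec b)"
  shows "outer a b *\<^sub>v x = (b \<bullet> x) \<cdot>\<^sub>v a"
  using assms by (intro eq_vecI) (auto simp: scalar_prod_def sum_distrib_left ac_simps)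

definition tc :: "real mat \<Rightarrow> nat \<Rightarrow> real mat" where
  "tc A k = mat (dim_row A) k (\<lambda>(i,j). A $$ (i,j))"
definition tr :: "real mat \<Rightarrow> nat \<Rightarrow> real mat" where
  "tr R k = mat k (dim_col R) (\<lambda>(i,j). R $$ (i,j))"

lemma split_mult: assumes A: "A \<in> carrier_mat m (Suc k)" and R: "R \<in> carrier_mat (Suc k) p"
  shows "A * R = tc A k * tr R k + outer (col A k) (row R k)"
proof (rule eq_matI)
  fix i j assume i: "i < dim_row (tc A k * tr R k + outer (col A k) (row R k))"
    and j: "j < dim_col (tc A k * tr R k + outer (col A k) (row R k))"
  hence i: "i < m" and j: "j < p" using A R by (auto simp: tc_def tr_def)
  have "(A * R) $$ (i,j) = (\<Sum>l<Suc k. A $$ (i,l) * R $$ (l,j))"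
    using A R i j by (auto simp: scalar_prod_def atLeast0LessThan)
  also have "\<dots> = (\<Sum>l<k. A $$ (i,l) * R $$ (l,j)) + A $$ (i,k) * R $$ (k,j)" by simp
  also have "\<dots> = (tc A k * tr R k + outer (col A k) (row R k)) $$ (i,j)"
    using A R i j by (auto simp: scalar_prod_def atLeast0LessThan tc_def tr_def)
  finally show "(A * R) $$ (i,j) = (tc A k * tr R k + outer (col A k) (row R k)) $$ (i,j)" .
qed (use A R in \<open>auto simp: tc_def tr_def\<close>)

lemma col_split_eq: assumes A: "A \<in> carrier_mat m (Suc k)" and B: "B \<in> carrier_mat m m"
  and 1: "B * tc A k = tc A k" and 2: "B *\<^sub>v col A k = col A k"
  shows "B * A = A"
proof (rule eq_matI)
  fix i j assume i: "i < dim_row A" and j: "j < dim_col A"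
  show "(B * A) $$ (i,j) = A $$ (i,j)"
  proof (cases "j < k")
    case True
    have "(B * tc A k) $$ (i,j) = tc A k $$ (i,j)" using 1 by simp
    thus ?thesis using A B i j True by (auto simp: tc_def col_def scalar_prod_def)
  next
    case False
    hence jk: "j = k" using j A by auto
    have "(B *\<^sub>v col A k) $ i = col A k $ i" using 2 by simp
    thus ?thesis using A B i j jk by (auto simp: col_def scalar_prod_def)
  qed
qed (use A B in auto)

lemma proj_exists:
  "(A::real mat) \<in> carrier_mat m k \<Longrightarrow> \<exists>R \<in> carrier_mat k m. (A * R)\<^sup>T = A * R \<and> A * R * A = A"
proof (induction k arbitrary: A)
  case 0
  show ?case
  proof (intro bexI[of _ "0\<^sub>m 0 m"] conjI)
    show "(A * 0\<^sub>m 0 m)\<^sup>T = A * 0\<^sub>m 0 m" using 0 by (intro eq_matI) (auto simp: scalar_prod_def)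
    show "A * 0\<^sub>m 0 m * A = A" using 0 by (intro eq_matI) auto
  qed auto
next
  case (Suc k)
  note A = Suc.prems
  define A0 where "A0 = tc A k"
  have A0: "A0 \<in> carrier_mat m k" using A by (auto simp: A0_def tc_def)
  from Suc.IH[OF A0] obtain R0 where R0: "R0 \<in> carrier_mat k m"
    and s0: "(A0 * R0)\<^sup>T = A0 * R0" and p0: "A0 * R0 * A0 = A0" by auto
  define Q0 where "Q0 = A0 * R0"
  have Q0: "Q0 \<in> carrier_mat m m" using A0 R0 by (auto simp: Q0_def)
  have Q0s: "Q0\<^sup>T = Q0" using s0 by (simp add: Q0_def)
  have Q0A0: "Q0 * A0 = A0" using p0 by (simp add: Q0_def)
  have Q0Q0: "Q0 * Q0 = Q0"
  proof -
    have "Q0 * Q0 = Q0 * A0 * R0" unfolding Q0_def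
      by (rule assoc_mult_mat[OF _ A0 R0, symmetric]) (use A0 R0 in auto)
    thus ?thesis using Q0A0 by (simp add: Q0_def)
  qed
  define a where "a = col A k"
  have a: "a \<in> carrier_vec m" using A by (auto simp: a_def)
  define a' where "a' = a - Q0 *\<^sub>v a"
  have a': "a' \<in> carrier_vec m" using a Q0 by (auto simp: a'_def)
  have Q0a': "Q0 *\<^sub>v a' = 0\<^sub>v m"
  proof -
    have "Q0 *\<^sub>v a' = Q0 *\<^sub>v a - Q0 *\<^sub>v (Q0 *\<^sub>v a)" unfolding a'_def
      using Q0 a by (auto simp: mult_minus_distrib_mat_vec)
    also have "Q0 *\<^sub>v (Q0 *\<^sub>v a) = Q0 *\<^sub>v a" using Q0Q0 Q0 a
      by (metis assoc_mult_mat_vec)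
    finally show ?thesis using Q0 a by (intro eq_vecI) auto
  qed
  have A0a': "A0\<^sup>T *\<^sub>v a' = 0\<^sub>v k"
  proof -
    have "A0\<^sup>T * Q0 = A0\<^sup>T" using Q0A0 Q0s A0 Q0 by (metis transpose_mult)
    hence "A0\<^sup>T *\<^sub>v (Q0 *\<^sub>v a) = A0\<^sup>T *\<^sub>v a" using A0 Q0 a
      by (metis assoc_mult_mat_vec carrier_matD(1) carrier_matI index_transpose_mat(2,3))
    moreover have "A0\<^sup>T *\<^sub>v a' = A0\<^sup>T *\<^sub>v a - A0\<^sup>T *\<^sub>v (Q0 *\<^sub>v a)" unfolding a'_def
      using Q0 a A0 by (auto simp: mult_minus_distrib_mat_vec)
    ultimately show ?thesis using A0 a by (intro eq_vecI) auto
  qed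
  have trS: "tr (mat (Suc k) m (\<lambda>(l,i). if l < k then R1 $$ (l,i) else w $ i)) k = R1"
    if "R1 \<in> carrier_mat k m" for R1 w
    using that by (intro eq_matI) (auto simp: tr_def)
  have rowS: "row (mat (Suc k) m (\<lambda>(l,i). if l < k then R1 $$ (l,i) else w $ i)) k = vec m (\<lambda>i. w $ i)"
    for R1 :: "real mat" and w :: "real vec"
    by (intro eq_vecI) auto
  show ?case
  proof (cases "a' = 0\<^sub>v m")
    case True
    define R where "R = mat (Suc k) m (\<lambda>(l,i). if l < k then R0 $$ (l,i) else (0\<^sub>v m) $ i)"
    have R: "R \<in> carrier_mat (Suc k) m" by (simp add: R_def)
    have rw0: "vec m (\<lambda>i. (0\<^sub>v m :: real vec) $ i) = 0\<^sub>v m" by (intro eq_vecI) auto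
    have "A * R = A0 * R0 + outer a (0\<^sub>v m)"
      using split_mult[OF A R] trS[OF R0, of "0\<^sub>v m"] rowS[of R0 "0\<^sub>v m"] rw0
      by (simp add: R_def A0_def a_def)
    also have "\<dots> = Q0" using Q0 a A0 R0 by (intro eq_matI) (auto simp: Q0_def)
    finally have AR: "A * R = Q0" .
    have "a - Q0 *\<^sub>v a = 0\<^sub>v m" using True by (simp add: a'_def)
    hence "a = Q0 *\<^sub>v a" by (rule vec_minus_eq0[OF a mult_mat_vec_carrier[OF Q0 a]])
    hence "Q0 *\<^sub>v a = a" by simp
    hence "Q0 * A = A" using col_split_eq[OF A Q0] Q0A0 by (simp add: A0_def a_def)
    thus ?thesis using R AR Q0s by auto
  next
    case False
    define c where "c = a' \<bullet> a'"
    have c: "c > 0" using sprod_self_ge0[of a'] sprod_self_eq0[OF a'] False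
      unfolding c_def by force
    define w where "w = (1 / c) \<cdot>\<^sub>v a'"
    have w: "w \<in> carrier_vec m" using a' by (simp add: w_def)
    define R1 where "R1 = R0 - outer (R0 *\<^sub>v a) w"
    have R1: "R1 \<in> carrier_mat k m" using R0 w by (auto simp: R1_def)
    define R where "R = mat (Suc k) m (\<lambda>(l,i). if l < k then R1 $$ (l,i) else w $ i)"
    have R: "R \<in> carrier_mat (Suc k) m" by (simp add: R_def)
    have rw: "vec m (\<lambda>i. w $ i) = w" using w by (intro eq_vecI) auto
    have "A * R = A0 * R1 + outer a w"
      using split_mult[OF A R] trS[OF R1, of w] rowS[of R1 w] rw
      by (simp add: R_def A0_def a_def)
    also have "A0 * R1 = Q0 - outer (Q0 *\<^sub>v a) w"
    proof -
      have oc: "outer (R0 *\<^sub>v a) w \<in> carrier_mat k m" using R0 w outer_carrier[of "R0 *\<^sub>v a" w] by auto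
      have "A0 * R1 = A0 * R0 - A0 * outer (R0 *\<^sub>v a) w" unfolding R1_def
        by (rule mult_minus_distrib_mat[OF A0 R0 oc])
      also have "A0 * outer (R0 *\<^sub>v a) w = outer (A0 *\<^sub>v (R0 *\<^sub>v a)) w"
        using A0 R0 by (auto simp: mult_outer)
      also have "A0 *\<^sub>v (R0 *\<^sub>v a) = Q0 *\<^sub>v a" using A0 R0 a
        by (simp add: Q0_def assoc_mult_mat_vec)
      finally show ?thesis by (simp add: Q0_def)
    qed
    also have "Q0 - outer (Q0 *\<^sub>v a) w + outer a w = Q0 + outer a' w"
      using Q0 a w by (intro eq_matI) (auto simp: a'_def algebra_simps)
    finally have AR: "A * R = Q0 + outer a' w" .
    have osym: "(outer a' w)\<^sup>T = outer a' w"
      using a' w by (intro eq_matI) (auto simp: w_def)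
    have oc2: "outer a' w \<in> carrier_mat m m" using outer_carrier[of a' w] a' w by auto
    have sym: "(A * R)\<^sup>T = A * R" unfolding AR using Q0s osym transpose_add[OF Q0 oc2]
      by simp
    have A0T: "A0\<^sup>T \<in> carrier_mat k m" using A0 by simp
    have QA0: "(Q0 + outer a' w) * A0 = A0"
    proof -
      have "(Q0 + outer a' w) * A0 = Q0 * A0 + outer a' w * A0"
        by (rule add_mult_distrib_mat[OF Q0 oc2 A0])
      also have "outer a' w * A0 = outer a' (A0\<^sup>T *\<^sub>v w)" by (rule outer_mult) (use A0 w in auto)
      also have "A0\<^sup>T *\<^sub>v w = (1 / c) \<cdot>\<^sub>v (A0\<^sup>T *\<^sub>v a')" unfolding w_def
        by (rule mult_mat_vec[OF A0T a'])
      also have "\<dots> = 0\<^sub>v k" using A0a' by (intro eq_vecI) auto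
      finally show ?thesis using Q0A0 A0 a' by (intro eq_matI) auto
    qed
    have Q0a: "Q0 *\<^sub>v a \<in> carrier_vec m" using Q0 a by simp
    have wa: "w \<bullet> a = 1"
    proof -
      have "a' \<bullet> (Q0 *\<^sub>v a) = (Q0\<^sup>T *\<^sub>v a') \<bullet> a"
        by (rule transpose_vec_mult_scalar[OF Q0 a a', symmetric])
      also have "\<dots> = 0" using Q0s Q0a' a by simp
      finally have z: "a' \<bullet> (Q0 *\<^sub>v a) = 0" .
      have "a = a' + Q0 *\<^sub>v a" using a Q0 unfolding a'_def by (intro eq_vecI) auto
      hence "a' \<bullet> a = a' \<bullet> (a' + Q0 *\<^sub>v a)" by simp
      also have "\<dots> = a' \<bullet> a' + a' \<bullet> (Q0 *\<^sub>v a)" by (rule scalar_prod_add_distrib[OF a' a' Q0a])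
      finally have "a' \<bullet> a = c" using z unfolding c_def by simp
      thus ?thesis using c a a' unfolding w_def by (simp add: smult_scalar_prod_distrib[OF a' a])
    qed
    have Qa: "(Q0 + outer a' w) *\<^sub>v a = a"
    proof -
      have "(Q0 + outer a' w) *\<^sub>v a = Q0 *\<^sub>v a + outer a' w *\<^sub>v a"
        by (rule add_mult_distrib_mat_vec[OF Q0 oc2 a])
      also have "outer a' w *\<^sub>v a = (w \<bullet> a) \<cdot>\<^sub>v a'" by (rule outer_mult_vec) (use a w in auto)
      finally show ?thesis using wa a Q0 unfolding a'_def by (intro eq_vecI) auto
    qed
    have QQ: "Q0 + outer a' w \<in> carrier_mat m m" using Q0 oc2 by simp
    have "A * R * A = A" unfolding AR
      by (rule col_split_eq[OF A QQ]) (use QA0 Qa in \<open>simp_all add: A0_def a_def\<close>)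
    thus ?thesis using R sym by auto
  qed
qed


lemma penrose_exists: assumes A: "(A::real mat) \<in> carrier_mat nr nc" shows "\<exists>X. penrose A X"
proof -
  obtain R where R: "R \<in> carrier_mat nc nr" and Rs: "(A * R)\<^sup>T = A * R" and Rp: "A * R * A = A"
    using proj_exists[OF A] by auto
  have AT: "A\<^sup>T \<in> carrier_mat nc nr" using A by auto
  obtain R' where R': "R' \<in> carrier_mat nr nc" and R's: "(A\<^sup>T * R')\<^sup>T = A\<^sup>T * R'"
    and R'p: "A\<^sup>T * R' * A\<^sup>T = A\<^sup>T"
    using proj_exists[OF AT] by auto
  define P where "P = A\<^sup>T * R'"
  have P: "P \<in> carrier_mat nc nc" using AT R' by (simp add: P_def)
  have R'T: "R'\<^sup>T \<in> carrier_mat nc nr" using R' by simp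
  have P2: "P = R'\<^sup>T * A" using R's transpose_mult[OF AT R'] by (simp add: P_def)
  have AP: "A * P = A"
  proof -
    have "A = (A\<^sup>T * R' * A\<^sup>T)\<^sup>T" using R'p by simp
    also have "\<dots> = A * P\<^sup>T" using transpose_mult[OF mult_carrier_mat[OF AT R'] AT]
      by (simp add: P_def)
    finally show ?thesis using R's by (simp add: P_def)
  qed
  define X where "X = P * R"
  have X: "X \<in> carrier_mat nc nr" using P R by (simp add: X_def)
  have AX: "A * X = A * R"
    unfolding X_def using assoc_mult_mat[OF A P R] AP by simp
  have XA: "X * A = P"
  proof -
    have "X * A = P * (R * A)" unfolding X_def by (rule assoc_mult_mat[OF P R A])
    also have "\<dots> = R'\<^sup>T * A * (R * A)" unfolding P2 ..
    also have "\<dots> = R'\<^sup>T * (A * (R * A))" by (rule assoc_mult_mat[OF R'T A mult_carrier_mat[OF R A]])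
    also have "A * (R * A) = A * R * A" by (rule assoc_mult_mat[OF A R A, symmetric])
    finally show ?thesis using Rp P2 by simp
  qed
  have PP: "P * P = P"
  proof -
    have "P * P = R'\<^sup>T * A * P" by (simp add: P2[symmetric])
    also have "\<dots> = R'\<^sup>T * (A * P)" using assoc_mult_mat[OF R'T A P] .
    finally show ?thesis using AP P2 by simp
  qed
  have "penrose A X"
    unfolding penrose_def
  proof (intro conjI)
    show "X \<in> carrier_mat (dim_col A) (dim_row A)" using X A by simp
    show "A * X * A = A" using AX Rp by simp
    show "X * A * X = X" using XA PP assoc_mult_mat[OF P P R] by (simp add: X_def)
    show "(A * X)\<^sup>T = A * X" using AX Rs by simp
    show "(X * A)\<^sup>T = X * A" using XA R's by (simp add: P_def)
  qed
  thus ?thesis ..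
qed

lemma pinv_penrose: assumes A: "A \<in> carrier_mat nr nc" shows "penrose A (pinv A)"
proof -
  obtain X where X: "penrose A X" using penrose_exists[OF A] by auto
  show ?thesis using pinv_eq[OF A X] X by simp
qed

lemma pinv_range: assumes F: "(F::real mat) \<in> carrier_mat r N" and v: "v \<in> carrier_vec N"
  shows "(F * F\<^sup>T) *\<^sub>v (pinv (F * F\<^sup>T) *\<^sub>v (F *\<^sub>v v)) = F *\<^sub>v v"
proof -
  define M where "M = F * F\<^sup>T"
  have FT: "F\<^sup>T \<in> carrier_mat N r" using F by simp
  have M: "M \<in> carrier_mat r r" using F by (simp add: M_def)
  have Ms: "M\<^sup>T = M" using transpose_mult[OF F FT] by (simp add: M_def)
  define X where "X = pinv M"
  have P: "penrose M X" using pinv_penrose[OF M] by (simp add: X_def)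
  hence X: "X \<in> carrier_mat r r" using M by (simp add: penrose_def)
  define Q where "Q = M * X"
  have Q: "Q \<in> carrier_mat r r" using M X by (simp add: Q_def)
  have Qs: "Q\<^sup>T = Q" using P by (simp add: penrose_def Q_def)
  have QM: "Q * M = M" using P by (simp add: penrose_def Q_def)
  have MQ: "M * Q = M"
  proof -
    have "(Q * M)\<^sup>T = M * Q" using transpose_mult[OF Q M] Qs Ms by simp
    thus ?thesis using QM Ms by simp
  qed
  have key: "F\<^sup>T *\<^sub>v (Q *\<^sub>v t) = F\<^sup>T *\<^sub>v t" if t: "t \<in> carrier_vec r" for t
  proof -
    define s where "s = Q *\<^sub>v t - t"
    have s: "s \<in> carrier_vec r" using Q t by (simp add: s_def)
    have "M *\<^sub>v s = M *\<^sub>v (Q *\<^sub>v t) - M *\<^sub>v t" unfolding s_def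
      using M Q t by (simp add: mult_minus_distrib_mat_vec)
    also have "M *\<^sub>v (Q *\<^sub>v t) = M *\<^sub>v t" using MQ assoc_mult_mat_vec[OF M Q t] by simp
    finally have Ms0: "M *\<^sub>v s = 0\<^sub>v r" using M t by (intro eq_vecI) auto
    have "(F\<^sup>T *\<^sub>v s) \<bullet> (F\<^sup>T *\<^sub>v s) = s \<bullet> (F *\<^sub>v (F\<^sup>T *\<^sub>v s))"
      by (rule transpose_vec_mult_scalar[OF F mult_mat_vec_carrier[OF FT s] s])
    also have "F *\<^sub>v (F\<^sup>T *\<^sub>v s) = M *\<^sub>v s" unfolding M_def using assoc_mult_mat_vec[OF F FT s] by simp
    finally have "(F\<^sup>T *\<^sub>v s) \<bullet> (F\<^sup>T *\<^sub>v s) = 0" using Ms0 s by simp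
    hence "F\<^sup>T *\<^sub>v s = 0\<^sub>v N" using sprod_self_eq0[OF mult_mat_vec_carrier[OF FT s]] by simp
    moreover have "F\<^sup>T *\<^sub>v s = F\<^sup>T *\<^sub>v (Q *\<^sub>v t) - F\<^sup>T *\<^sub>v t" unfolding s_def
      by (rule mult_minus_distrib_mat_vec[OF FT mult_mat_vec_carrier[OF Q t] t])
    ultimately have "F\<^sup>T *\<^sub>v (Q *\<^sub>v t) - F\<^sup>T *\<^sub>v t = 0\<^sub>v N" by simp
    thus ?thesis by (rule vec_minus_eq0[OF mult_mat_vec_carrier[OF FT mult_mat_vec_carrier[OF Q t]] mult_mat_vec_carrier[OF FT t]])
  qed
  define u where "u = F *\<^sub>v v"
  have u: "u \<in> carrier_vec r" using F v by (simp add: u_def)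
  have orth: "(Q *\<^sub>v u) \<bullet> t = u \<bullet> t" if t: "t \<in> carrier_vec r" for t
  proof -
    have "(Q *\<^sub>v u) \<bullet> t = u \<bullet> (Q *\<^sub>v t)" using transpose_vec_mult_scalar[OF Q t u] Qs by simp
    also have "\<dots> = (Q *\<^sub>v t) \<bullet> u" by (rule comm_scalar_prod[OF u mult_mat_vec_carrier[OF Q t]])
    also have "\<dots> = (F\<^sup>T *\<^sub>v (Q *\<^sub>v t)) \<bullet> v" unfolding u_def
      by (rule transpose_vec_mult_scalar[OF F v mult_mat_vec_carrier[OF Q t], symmetric])
    also have "\<dots> = (F\<^sup>T *\<^sub>v t) \<bullet> v" using key[OF t] by simp
    also have "\<dots> = t \<bullet> u" unfolding u_def by (rule transpose_vec_mult_scalar[OF F v t])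
    also have "\<dots> = u \<bullet> t" by (rule comm_scalar_prod[OF t u])
    finally show ?thesis .
  qed
  define e where "e = Q *\<^sub>v u - u"
  have e: "e \<in> carrier_vec r" using Q u by (simp add: e_def)
  have "(Q *\<^sub>v u - u) \<bullet> e = (Q *\<^sub>v u) \<bullet> e - u \<bullet> e"
    by (rule minus_scalar_prod_distrib[OF mult_mat_vec_carrier[OF Q u] u e])
  hence "e \<bullet> e = (Q *\<^sub>v u) \<bullet> e - u \<bullet> e" unfolding e_def[symmetric] .
  hence "e \<bullet> e = 0" using orth[OF e] by simp
  hence "e = 0\<^sub>v r" using sprod_self_eq0[OF e] by simp
  hence Qu: "Q *\<^sub>v u = u" unfolding e_def by (rule vec_minus_eq0[OF mult_mat_vec_carrier[OF Q u] u])
  have "M *\<^sub>v (X *\<^sub>v u) = u" using Qu assoc_mult_mat_vec[OF M X u] unfolding Q_def by simp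
  thus ?thesis unfolding M_def X_def u_def .
qed


definition dv :: "(nat \<Rightarrow> real) \<Rightarrow> real vec \<Rightarrow> real vec" where
  "dv d v = vec (dim_vec v) (\<lambda>k. d k * v $ k)"

lemma dv_carrier[simp]: "v \<in> carrier_vec N \<Longrightarrow> dv d v \<in> carrier_vec N"
  and dv_dim[simp]: "dim_vec (dv d v) = dim_vec v"
  and dv_index[simp]: "k < dim_vec v \<Longrightarrow> dv d v $ k = d k * v $ k"
  unfolding dv_def by auto

lemma dv_sprod: "dim_vec w = dim_vec v \<Longrightarrow> dv d w \<bullet> v = w \<bullet> dv d v"
  unfolding scalar_prod_def dv_def by (auto intro: sum.cong)

locale absset =
  fixes N r :: nat and Bm :: "real mat" and d :: "nat \<Rightarrow> real" and ks :: "nat list"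
  assumes Bm: "Bm \<in> carrier_mat r N"
    and d01: "\<And>k. d k = 0 \<or> d k = 1"
    and ks: "set ks = {k. k < N \<and> d k = 0}"
begin

definition "C = mat_of_rows N (map (unit_vec N) ks @ rows Bm)"
definition "F = mat r N (\<lambda>(i,k). Bm $$ (i,k) * d k)"
definition "inV v \<longleftrightarrow> v \<in> carrier_vec N \<and> (\<forall>k<N. d k = 0 \<longrightarrow> v $ k = 0) \<and> Bm *\<^sub>v v = 0\<^sub>v r"

lemma C_carrier: "C \<in> carrier_mat (length ks + r) N"
  unfolding C_def using Bm mat_of_rows_carrier[of N "map (unit_vec N) ks @ rows Bm"] by simp

lemma F_carrier: "F \<in> carrier_mat r N" unfolding F_def by simp

lemma dd: "d k * d k = d k" using d01[of k] by auto

lemma F_mult: assumes "z \<in> carrier_vec N" shows "F *\<^sub>v z = Bm *\<^sub>v dv d z"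
  using assms Bm unfolding F_def
  by (intro eq_vecI) (auto simp: scalar_prod_def row_def intro!: sum.cong)

lemma FT_mult: assumes "y \<in> carrier_vec r" shows "F\<^sup>T *\<^sub>v y = dv d (Bm\<^sup>T *\<^sub>v y)"
  using assms Bm unfolding F_def
  by (intro eq_vecI) (auto simp: scalar_prod_def sum_distrib_left ac_simps intro!: sum.cong)

lemma dv_idem: "dv d (dv d v) = dv d v"
  by (intro eq_vecI) (auto simp: mult.assoc[symmetric] dd)

lemma C_mult_index: assumes v: "v \<in> carrier_vec N" and i: "i < length ks + r"
  shows "(C *\<^sub>v v) $ i = (if i < length ks then v $ (ks ! i) else (Bm *\<^sub>v v) $ (i - length ks))"
proof -
  have ksN: "ks ! i < N" if "i < length ks" for i using ks that nth_mem by blast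
  have "(C *\<^sub>v v) $ i = row C i \<bullet> v" using C_carrier i by simp
  also have "row C i = (map (unit_vec N) ks @ rows Bm) ! i" unfolding C_def
    using i Bm ksN by (intro mat_of_rows_row) (auto simp: nth_append)
  finally show ?thesis using i v Bm ksN by (auto simp: nth_append scalar_prod_left_unit)
qed

lemma kerC: assumes v: "v \<in> carrier_vec N"
  shows "C *\<^sub>v v = 0\<^sub>v (length ks + r) \<longleftrightarrow> inV v"
proof
  assume 0: "C *\<^sub>v v = 0\<^sub>v (length ks + r)"
  have a: "\<forall>k<N. d k = 0 \<longrightarrow> v $ k = 0"
  proof (intro allI impI)
    fix k assume k: "k < N" "d k = 0"
    then obtain i where i: "i < length ks" "ks ! i = k" using ks by (metis (mono_tags, lifting) in_set_conv_nth mem_Collect_eq)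
    have "(C *\<^sub>v v) $ i = 0" using 0 i by simp
    thus "v $ k = 0" using C_mult_index[OF v, of i] i by simp
  qed
  have "Bm *\<^sub>v v = 0\<^sub>v r"
  proof (intro eq_vecI)
    fix j assume j: "j < dim_vec (0\<^sub>v r :: real vec)"
    have "(C *\<^sub>v v) $ (length ks + j) = 0" using 0 j by simp
    thus "(Bm *\<^sub>v v) $ j = 0\<^sub>v r $ j" using C_mult_index[OF v, of "length ks + j"] j by simp
  qed (use Bm in simp)
  thus "inV v" using a v unfolding inV_def by simp
next
  assume "inV v"
  hence a: "\<forall>k<N. d k = 0 \<longrightarrow> v $ k = 0" and b: "Bm *\<^sub>v v = 0\<^sub>v r" unfolding inV_def by auto
  have ksN: "ks ! i < N \<and> d (ks ! i) = 0" if "i < length ks" for i using ks that nth_mem by blast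
  show "C *\<^sub>v v = 0\<^sub>v (length ks + r)"
  proof (intro eq_vecI)
    fix i assume i: "i < dim_vec (0\<^sub>v (length ks + r) :: real vec)"
    show "(C *\<^sub>v v) $ i = 0\<^sub>v (length ks + r) $ i"
      using C_mult_index[OF v, of i] i a b ksN[of i]
      by (auto dest!: arg_cong[where f="\<lambda>x. x $ (i - length ks)"])
  qed (use C_carrier in simp)
qed

lemma inV_dv: "inV v \<Longrightarrow> dv d v = v"
  unfolding inV_def using d01 by (intro eq_vecI) (force)+

lemma unique_proj:
  assumes x: "x \<in> carrier_vec N" and y1: "inV y1" and y2: "inV y2"
    and o1: "\<And>v. inV v \<Longrightarrow> (x - y1) \<bullet> v = 0" and o2: "\<And>v. inV v \<Longrightarrow> (x - y2) \<bullet> v = 0"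
  shows "y1 = y2"
proof -
  have c1: "y1 \<in> carrier_vec N" and c2: "y2 \<in> carrier_vec N" using y1 y2 unfolding inV_def by auto
  have "inV (y1 - y2)" using y1 y2 Bm unfolding inV_def
    by (auto simp: mult_minus_distrib_mat_vec)
  hence "(x - y2) \<bullet> (y1 - y2) - (x - y1) \<bullet> (y1 - y2) = 0" using o1 o2 by simp
  moreover have "(x - y2) \<bullet> (y1 - y2) - (x - y1) \<bullet> (y1 - y2) = (y1 - y2) \<bullet> (y1 - y2)"
    using x c1 c2 unfolding scalar_prod_def by (auto simp: algebra_simps sum_subtractf[symmetric] intro!: sum.cong)
  ultimately have "(y1 - y2) \<bullet> (y1 - y2) = 0" by simp
  hence "y1 - y2 = 0\<^sub>v N" using sprod_self_eq0[of "y1 - y2" N] c1 c2 by simp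
  thus ?thesis by (rule vec_minus_eq0[OF c1 c2])
qed

lemma sa_psd:
  assumes x1: "x1 \<in> carrier_vec N" and x2: "x2 \<in> carrier_vec N" and p1: "inV p1" and p2: "inV p2"
    and o1: "\<And>v. inV v \<Longrightarrow> (x1 - p1) \<bullet> v = 0" and o2: "\<And>v. inV v \<Longrightarrow> (x2 - p2) \<bullet> v = 0"
  shows "p1 \<bullet> x2 = x1 \<bullet> p2" and "p1 \<bullet> x1 \<ge> 0"
proof -
  have c1: "p1 \<in> carrier_vec N" and c2: "p2 \<in> carrier_vec N" using p1 p2 unfolding inV_def by auto
  have "p1 \<bullet> x2 - x1 \<bullet> p2 = (x2 - p2) \<bullet> p1 - (x1 - p1) \<bullet> p2"
    using x1 x2 c1 c2 unfolding scalar_prod_def by (auto simp: algebra_simps sum_subtractf[symmetric] intro!: sum.cong)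
  thus "p1 \<bullet> x2 = x1 \<bullet> p2" using o1[OF p2] o2[OF p1] by simp
  have "p1 \<bullet> x1 = p1 \<bullet> p1 + (x1 - p1) \<bullet> p1"
    using x1 c1 unfolding scalar_prod_def by (auto simp: algebra_simps sum.distrib[symmetric] intro!: sum.cong)
  thus "p1 \<bullet> x1 \<ge> 0" using o1[OF p1] sprod_self_ge0[of p1] by simp
qed

lemma main_abs:
  assumes x: "x \<in> carrier_vec N"
  defines "z \<equiv> pinv (F * F\<^sup>T) *\<^sub>v (F *\<^sub>v x)"
  defines "yP \<equiv> dv d x - dv d (Bm\<^sup>T *\<^sub>v z)"
  shows "inV yP" and "\<And>v. inV v \<Longrightarrow> (x - yP) \<bullet> v = 0"
    and "(1\<^sub>m N - C\<^sup>T * pinv (C * C\<^sup>T) * C) *\<^sub>v x = yP"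
proof -
  have F: "F \<in> carrier_mat r N" by (rule F_carrier)
  have FT: "F\<^sup>T \<in> carrier_mat N r" using F by simp
  have FF: "F * F\<^sup>T \<in> carrier_mat r r" using F by simp
  have pF: "pinv (F * F\<^sup>T) \<in> carrier_mat r r" using pinv_penrose[OF FF] F by (simp add: penrose_def)
  have z: "z \<in> carrier_vec r" unfolding z_def using pF F x by simp
  have BmT: "Bm\<^sup>T \<in> carrier_mat N r" using Bm by simp
  define w where "w = Bm\<^sup>T *\<^sub>v z"
  have w: "w \<in> carrier_vec N" unfolding w_def using BmT z by simp
  have yP: "yP \<in> carrier_vec N" unfolding yP_def using x w w_def by simp
  have Bdx: "Bm *\<^sub>v dv d x = F *\<^sub>v x" using F_mult[OF x] by simp
  have Bdw: "Bm *\<^sub>v dv d w = F *\<^sub>v x"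
  proof -
    have e: "dv d w = F\<^sup>T *\<^sub>v z" using FT_mult[OF z] by (simp add: w_def)
    have "Bm *\<^sub>v dv d w = Bm *\<^sub>v dv d (dv d w)" by (simp add: dv_idem)
    also have "\<dots> = F *\<^sub>v dv d w" using F_mult[of "dv d w"] w by simp
    also have "\<dots> = F *\<^sub>v (F\<^sup>T *\<^sub>v z)" by (simp only: e)
    also have "F *\<^sub>v (F\<^sup>T *\<^sub>v z) = (F * F\<^sup>T) *\<^sub>v z" by (rule assoc_mult_mat_vec[OF F FT z, symmetric])
    also have "\<dots> = F *\<^sub>v x" unfolding z_def by (rule pinv_range[OF F x])
    finally show ?thesis .
  qed
  have "Bm *\<^sub>v yP = Bm *\<^sub>v dv d x - Bm *\<^sub>v dv d w" unfolding yP_def w_def[symmetric]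
    by (rule mult_minus_distrib_mat_vec[OF Bm]) (use x w in auto)
  hence "Bm *\<^sub>v yP = 0\<^sub>v r" unfolding Bdx Bdw using F x by (intro eq_vecI) auto
  moreover have "\<forall>k<N. d k = 0 \<longrightarrow> yP $ k = 0" using x w unfolding yP_def w_def[symmetric] by auto
  ultimately show inVP: "inV yP" using yP unfolding inV_def by auto
  show oP: "(x - yP) \<bullet> v = 0" if v: "inV v" for v
  proof -
    have vc: "v \<in> carrier_vec N" and vd: "dv d v = v" and Bv: "Bm *\<^sub>v v = 0\<^sub>v r"
      using v inV_dv unfolding inV_def by auto
    have vk: "v $ k = d k * v $ k" if "k < N" for k using vd that vc
      by (metis carrier_vecD dv_index)
    have "(x - yP) \<bullet> v = w \<bullet> v"
      unfolding yP_def w_def[symmetric] scalar_prod_def using x w vc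
    proof (simp, intro sum.cong refl)
      fix k assume "k \<in> {0..<N}"
      hence "k < N" by simp
      thus "(x $ k - (d k * x $ k - d k * w $ k)) * v $ k = w $ k * v $ k"
        using vk[of k] d01[of k] by (cases "d k = 0") auto
    qed
    also have "\<dots> = z \<bullet> (Bm *\<^sub>v v)" unfolding w_def by (rule transpose_vec_mult_scalar[OF Bm vc z])
    finally show ?thesis using Bv z by simp
  qed
  have Cc: "C \<in> carrier_mat (length ks + r) N" by (rule C_carrier)
  have CT: "C\<^sup>T \<in> carrier_mat N (length ks + r)" using Cc by simp
  have CC: "C * C\<^sup>T \<in> carrier_mat (length ks + r) (length ks + r)" using Cc by simp
  have pC: "pinv (C * C\<^sup>T) \<in> carrier_mat (length ks + r) (length ks + r)"
    using pinv_penrose[OF CC] Cc by (simp add: penrose_def)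
  define X where "X = pinv (C * C\<^sup>T)"
  have X: "X \<in> carrier_mat (length ks + r) (length ks + r)" using pC by (simp add: X_def)
  define w' where "w' = X *\<^sub>v (C *\<^sub>v x)"
  have w': "w' \<in> carrier_vec (length ks + r)" using X Cc x by (simp add: w'_def)
  have CTXC: "C\<^sup>T * X * C \<in> carrier_mat N N" using CT X Cc by simp
  have "(1\<^sub>m N - C\<^sup>T * X * C) *\<^sub>v x = 1\<^sub>m N *\<^sub>v x - (C\<^sup>T * X * C) *\<^sub>v x"
    by (rule minus_mult_distrib_mat_vec[OF _ CTXC x]) simp
  also have "(C\<^sup>T * X * C) *\<^sub>v x = C\<^sup>T *\<^sub>v w'" unfolding w'_def
    using assoc_mult_mat_vec[OF mult_carrier_mat[OF CT X] Cc x] assoc_mult_mat_vec[OF CT X mult_mat_vec_carrier[OF Cc x]]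
    by simp
  finally have yH: "(1\<^sub>m N - C\<^sup>T * X * C) *\<^sub>v x = x - C\<^sup>T *\<^sub>v w'" using x by simp
  define yH where "yH = x - C\<^sup>T *\<^sub>v w'"
  have yHc: "yH \<in> carrier_vec N" using x CT w' by (simp add: yH_def)
  have "C *\<^sub>v yH = C *\<^sub>v x - C *\<^sub>v (C\<^sup>T *\<^sub>v w')" unfolding yH_def
    by (rule mult_minus_distrib_mat_vec[OF Cc x]) (use CT w' in simp)
  also have "C *\<^sub>v (C\<^sup>T *\<^sub>v w') = (C * C\<^sup>T) *\<^sub>v w'" by (rule assoc_mult_mat_vec[OF Cc CT w', symmetric])
  also have "\<dots> = C *\<^sub>v x" unfolding w'_def X_def by (rule pinv_range[OF Cc x])
  finally have "C *\<^sub>v yH = 0\<^sub>v (length ks + r)" using Cc x by (intro eq_vecI) auto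
  hence inVH: "inV yH" using kerC[OF yHc] by simp
  have oH: "(x - yH) \<bullet> v = 0" if v: "inV v" for v
  proof -
    have vc: "v \<in> carrier_vec N" using v unfolding inV_def by auto
    have Cv: "C *\<^sub>v v = 0\<^sub>v (length ks + r)" using kerC[OF vc] v by simp
    have "x - yH = C\<^sup>T *\<^sub>v w'" unfolding yH_def using x CT w'
      by (intro eq_vecI) auto
    hence "(x - yH) \<bullet> v = w' \<bullet> (C *\<^sub>v v)" using transpose_vec_mult_scalar[OF Cc vc w'] by simp
    thus ?thesis using Cv w' by simp
  qed
  have "yH = yP" by (rule unique_proj[OF x inVH inVP oH oP])
  thus "(1\<^sub>m N - C\<^sup>T * pinv (C * C\<^sup>T) * C) *\<^sub>v x = yP" using yH unfolding yH_def X_def by simp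
qed

end


lemma idx_lt: "(i::nat) < n \<Longrightarrow> j < n \<Longrightarrow> i * n + j < n * n"
proof -
  assume "i < n" "j < n"
  hence "i * n + j < i * n + n" by simp
  also have "\<dots> = (Suc i) * n" by simp
  also have "\<dots> \<le> n * n" using \<open>i < n\<close> by (intro mult_right_mono) auto
  finally show ?thesis .
qed

lemma idx_div: "(j::nat) < n \<Longrightarrow> (i * n + j) div n = i" and idx_mod: "(j::nat) < n \<Longrightarrow> (i * n + j) mod n = j"
  by simp_all

lemma sum_nn: fixes f :: "nat \<Rightarrow> 'a::comm_monoid_add" shows "(\<Sum>k<n*n. f k) = (\<Sum>i<n. \<Sum>j<n. f (i * n + j))"
proof -
  have "(\<Sum>k<n*n. f k) = (\<Sum>m<n. sum f {m*n..<m*n+n})" using sum.nat_group[of f n n] by simp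
  also have "\<dots> = (\<Sum>i<n. \<Sum>j<n. f (i * n + j))"
  proof -
    have "sum f {m*n..<m*n+n} = (\<Sum>j<n. f (m * n + j))" for m
    proof -
      have "sum f {m*n..<m*n+n} = sum f {0 + m*n..<n + m*n}" by (simp add: add.commute)
      also have "\<dots> = (\<Sum>j = 0..<n. f (j + m*n))" by (rule sum.shift_bounds_nat_ivl)
      finally show ?thesis by (simp add: atLeast0LessThan add.commute)
    qed
    thus ?thesis by simp
  qed
  finally show ?thesis .
qed

lemma sum_nn': fixes f :: "nat \<Rightarrow> 'a::comm_monoid_add" shows "(\<Sum>k\<in>{0..<n*n}. f k) = (\<Sum>i<n. \<Sum>j<n. f (i * n + j))"
  unfolding atLeast0LessThan by (rule sum_nn)

lemma vom_carrier[simp]: "vec_of_mat n X \<in> carrier_vec (n * n)"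
  and vom_dim[simp]: "dim_vec (vec_of_mat n X) = n * n"
  unfolding vec_of_mat_def by auto

lemma vom_index: "k < n * n \<Longrightarrow> vec_of_mat n X $ k = X $$ (k div n, k mod n)"
  unfolding vec_of_mat_def by simp

lemma vom_index2[simp]: "i < n \<Longrightarrow> j < n \<Longrightarrow> vec_of_mat n X $ (i * n + j) = X $$ (i, j)"
  unfolding vec_of_mat_def using idx_lt by simp

lemma mov_carrier[simp]: "mat_of_vec n v \<in> carrier_mat n n"
  and mov_dim_row[simp]: "dim_row (mat_of_vec n v) = n"
  and mov_dim_col[simp]: "dim_col (mat_of_vec n v) = n"
  and mov_index[simp]: "i < n \<Longrightarrow> j < n \<Longrightarrow> mat_of_vec n v $$ (i,j) = v $ (i * n + j)"
  unfolding mat_of_vec_def by auto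

lemma div_mod_lt: "(k::nat) < n * n \<Longrightarrow> k div n < n \<and> k mod n < n"
proof -
  assume k: "k < n * n"
  hence "n > 0" by (cases n) auto
  thus ?thesis using k less_mult_imp_div_less[of k n n] by simp
qed

lemma vom_mov: "v \<in> carrier_vec (n * n) \<Longrightarrow> vec_of_mat n (mat_of_vec n v) = v"
  by (intro eq_vecI) (auto simp: vom_index div_mod_lt)

lemma mov_vom: "X \<in> carrier_mat n n \<Longrightarrow> mat_of_vec n (vec_of_mat n X) = X"
  by (intro eq_matI) auto

lemma vom_inj: "X \<in> carrier_mat n n \<Longrightarrow> Y \<in> carrier_mat n n \<Longrightarrow> vec_of_mat n X = vec_of_mat n Y \<Longrightarrow> X = Y"
  by (metis mov_vom)

lemma frob_vom: assumes "X \<in> carrier_mat n n"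
  shows "frob_inner X Y = vec_of_mat n X \<bullet> vec_of_mat n Y"
  using assms unfolding frob_inner_def scalar_prod_def by (simp add: sum_nn')

lemma vom_minus: "X \<in> carrier_mat n n \<Longrightarrow> Y \<in> carrier_mat n n \<Longrightarrow>
   vec_of_mat n (X - Y) = vec_of_mat n X - vec_of_mat n Y"
  by (intro eq_vecI) (auto simp: vom_index div_mod_lt)

lemma Bmat_carrier[simp]: "Bmat n \<in> carrier_mat (2 * n) (n * n)"
  and Bmat_dim_row[simp]: "dim_row (Bmat n) = 2 * n" and Bmat_dim_col[simp]: "dim_col (Bmat n) = n * n"
  unfolding Bmat_def by auto

lemma delta_sum: "(a::nat) < M \<Longrightarrow> (\<Sum>k<M. (if a = k then 1 else 0) * (g k :: real)) = g a"
proof -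
  assume a: "a < M"
  have "(\<Sum>k<M. (if a = k then 1 else 0) * g k) = (\<Sum>k<M. if a = k then g k else 0)"
    by (intro sum.cong) auto
  also have "\<dots> = (\<Sum>k\<in>{a}. g k)" using a by (intro sum.mono_neutral_cong_right) auto
  finally show ?thesis by simp
qed

lemma Bop_dim: "X \<in> carrier_mat n n \<Longrightarrow> Bop n X \<in> carrier_vec (2 * n)"
proof -
  assume X: "X \<in> carrier_mat n n"
  have "Bop n X \<in> carrier_vec (n + n)" unfolding Bop_def ones_def
    by (rule append_carrier_vec) (use X in auto)
  thus ?thesis by (simp add: mult_2)
qed

lemma Bmat_index1: assumes r: "r < n" and k: "k < n * n"
  shows "Bmat n $$ (r, k) = (\<Sum>j<n. if r * n + j = k then 1 else 0)"
  unfolding Bmat_def Bop_def ones_def using r k idx_lt[OF r]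
  by (auto simp: scalar_prod_def atLeast0LessThan unit_vec_def intro!: sum.cong)

lemma Bmat_index2: assumes s: "s < n" and k: "k < n * n"
  shows "Bmat n $$ (n + s, k) = (\<Sum>i<n. if i * n + s = k then 1 else 0)"
  unfolding Bmat_def Bop_def ones_def using s k idx_lt[OF _ s]
  by (auto simp: scalar_prod_def atLeast0LessThan unit_vec_def intro!: sum.cong)

lemma Bop_idx1: "X \<in> carrier_mat n n \<Longrightarrow> r < n \<Longrightarrow> Bop n X $ r = (X *\<^sub>v ones n) $ r"
  by (simp add: Bop_def ones_def)
lemma Ones_idx1: "X \<in> carrier_mat n n \<Longrightarrow> r < n \<Longrightarrow> (X *\<^sub>v ones n) $ r = (\<Sum>j<n. X $$ (r,j))"
  by (simp add: ones_def scalar_prod_def atLeast0LessThan)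
lemma Bop_idx2: "X \<in> carrier_mat n n \<Longrightarrow> s < n \<Longrightarrow> Bop n X $ (n + s) = (X\<^sup>T *\<^sub>v ones n) $ s"
  by (simp add: Bop_def ones_def)
lemma Ones_idx2: "X \<in> carrier_mat n n \<Longrightarrow> s < n \<Longrightarrow> (X\<^sup>T *\<^sub>v ones n) $ s = (\<Sum>i<n. X $$ (i,s))"
  by (simp add: ones_def scalar_prod_def atLeast0LessThan)

lemma Bop_Bmat: assumes X: "X \<in> carrier_mat n n"
  shows "Bop n X = Bmat n *\<^sub>v vec_of_mat n X"
proof (rule eq_vecI)
  show "dim_vec (Bop n X) = dim_vec (Bmat n *\<^sub>v vec_of_mat n X)" using X Bop_dim[OF X] by simp
  fix r assume "r < dim_vec (Bmat n *\<^sub>v vec_of_mat n X)"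
  hence r: "r < 2 * n" by simp
  have "(Bmat n *\<^sub>v vec_of_mat n X) $ r = (\<Sum>k<n*n. Bmat n $$ (r,k) * vec_of_mat n X $ k)"
    using r by (simp add: scalar_prod_def atLeast0LessThan)
  also have "\<dots> = Bop n X $ r"
  proof (cases "r < n")
    case True
    have "(\<Sum>k<n*n. Bmat n $$ (r,k) * vec_of_mat n X $ k)
        = (\<Sum>k<n*n. \<Sum>j<n. (if r * n + j = k then 1 else 0) * vec_of_mat n X $ k)"
    proof (intro sum.cong refl)
      fix k assume "k \<in> {..<n*n}"
      hence k: "k < n * n" by simp
      show "Bmat n $$ (r, k) * vec_of_mat n X $ k
          = (\<Sum>j<n. (if r * n + j = k then 1 else 0) * vec_of_mat n X $ k)"
        unfolding Bmat_index1[OF True k] by (simp only: sum_distrib_right)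
    qed
    also have "\<dots> = (\<Sum>j<n. \<Sum>k<n*n. (if r * n + j = k then 1 else 0) * vec_of_mat n X $ k)"
      by (rule sum.swap)
    also have "\<dots> = (\<Sum>j<n. X $$ (r, j))"
    proof (intro sum.cong refl)
      fix j assume "j \<in> {..<n}"
      hence j: "j < n" by simp
      have "(\<Sum>k<n*n. (if r * n + j = k then 1 else 0) * vec_of_mat n X $ k) = vec_of_mat n X $ (r * n + j)"
        by (rule delta_sum[OF idx_lt[OF True j]])
      thus "(\<Sum>k<n*n. (if r * n + j = k then 1 else 0) * vec_of_mat n X $ k) = X $$ (r, j)"
        using True j by simp
    qed
    also have "\<dots> = Bop n X $ r" using Bop_idx1[OF X True] Ones_idx1[OF X True] by simp
    finally show ?thesis .
  next
    case False
    have rn: "r - n < n" using r False by simp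
    have rr: "r = n + (r - n)" using False by simp
    have "(\<Sum>k<n*n. Bmat n $$ (r,k) * vec_of_mat n X $ k)
        = (\<Sum>k<n*n. \<Sum>i<n. (if i * n + (r - n) = k then 1 else 0) * vec_of_mat n X $ k)"
    proof (intro sum.cong refl)
      fix k assume "k \<in> {..<n*n}"
      hence k: "k < n * n" by simp
      have "Bmat n $$ (r, k) = Bmat n $$ (n + (r - n), k)" by (simp only: rr[symmetric])
      also have "\<dots> = (\<Sum>i<n. if i * n + (r - n) = k then 1 else 0)" by (rule Bmat_index2[OF rn k])
      finally show "Bmat n $$ (r, k) * vec_of_mat n X $ k
          = (\<Sum>i<n. (if i * n + (r - n) = k then 1 else 0) * vec_of_mat n X $ k)"
        by (simp only: sum_distrib_right)
    qed
    also have "\<dots> = (\<Sum>i<n. \<Sum>k<n*n. (if i * n + (r - n) = k then 1 else 0) * vec_of_mat n X $ k)"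
      by (rule sum.swap)
    also have "\<dots> = (\<Sum>i<n. X $$ (i, r - n))"
    proof (intro sum.cong refl)
      fix i assume "i \<in> {..<n}"
      hence i: "i < n" by simp
      have "(\<Sum>k<n*n. (if i * n + (r - n) = k then 1 else 0) * vec_of_mat n X $ k) = vec_of_mat n X $ (i * n + (r - n))"
        by (rule delta_sum[OF idx_lt[OF i rn]])
      thus "(\<Sum>k<n*n. (if i * n + (r - n) = k then 1 else 0) * vec_of_mat n X $ k) = X $$ (i, r - n)"
        using rn i by simp
    qed
    also have "\<dots> = Bop n X $ (n + (r - n))" using Bop_idx2[OF X rn] Ones_idx2[OF X rn] by simp
    also have "n + (r - n) = r" using False by simp
    finally show ?thesis .
  qed
  finally show "Bop n X $ r = (Bmat n *\<^sub>v vec_of_mat n X) $ r" by (rule sym)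
qed


lemma Badj_eq: assumes y: "y \<in> carrier_vec (2 * n)"
  shows "Badj n y = mat_of_vec n ((Bmat n)\<^sup>T *\<^sub>v y)"
proof -
  define Z0 where "Z0 = mat_of_vec n ((Bmat n)\<^sup>T *\<^sub>v y)"
  have BT: "(Bmat n)\<^sup>T \<in> carrier_mat (n * n) (2 * n)" by simp
  have bz: "(Bmat n)\<^sup>T *\<^sub>v y \<in> carrier_vec (n * n)" by (rule mult_mat_vec_carrier[OF BT y])
  have vZ0: "vec_of_mat n Z0 = (Bmat n)\<^sup>T *\<^sub>v y" unfolding Z0_def by (rule vom_mov[OF bz])
  have key: "Bop n X \<bullet> y = vec_of_mat n X \<bullet> vec_of_mat n Z0" if X: "X \<in> carrier_mat n n" for X
  proof -
    have "Bop n X \<bullet> y = (Bmat n *\<^sub>v vec_of_mat n X) \<bullet> y" using Bop_Bmat[OF X] by simp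
    also have "\<dots> = y \<bullet> (Bmat n *\<^sub>v vec_of_mat n X)"
      by (rule comm_scalar_prod[OF mult_mat_vec_carrier[OF Bmat_carrier vom_carrier] y])
    also have "\<dots> = ((Bmat n)\<^sup>T *\<^sub>v y) \<bullet> vec_of_mat n X"
      by (rule transpose_vec_mult_scalar[OF Bmat_carrier vom_carrier y, symmetric])
    also have "\<dots> = vec_of_mat n X \<bullet> ((Bmat n)\<^sup>T *\<^sub>v y)"
      by (rule comm_scalar_prod[OF bz vom_carrier])
    finally show ?thesis using vZ0 by simp
  qed
  have PZ0: "Z0 \<in> carrier_mat n n \<and> (\<forall>X\<in>carrier_mat n n. Bop n X \<bullet> y = frob_inner X Z0)"
    using key frob_vom unfolding Z0_def by auto
  have uniq: "Z = Z0" if PZ: "Z \<in> carrier_mat n n \<and> (\<forall>X\<in>carrier_mat n n. Bop n X \<bullet> y = frob_inner X Z)" for Z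
  proof -
    have Z: "Z \<in> carrier_mat n n" using PZ by simp
    define D where "D = vec_of_mat n Z - vec_of_mat n Z0"
    have D: "D \<in> carrier_vec (n * n)" unfolding D_def by simp
    define X where "X = mat_of_vec n D"
    have X: "X \<in> carrier_mat n n" unfolding X_def by simp
    have vX: "vec_of_mat n X = D" unfolding X_def by (rule vom_mov[OF D])
    have "D \<bullet> vec_of_mat n Z = D \<bullet> vec_of_mat n Z0"
      using PZ X key[OF X] frob_vom[OF X, of Z] vX by simp
    moreover have "D \<bullet> D = D \<bullet> vec_of_mat n Z - D \<bullet> vec_of_mat n Z0"
      unfolding D_def by (rule scalar_prod_minus_distrib[of _ "n * n"]) auto
    ultimately have "D \<bullet> D = 0" by simp
    hence "D = 0\<^sub>v (n * n)" by (rule sprod_self_eq0[OF D])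
    hence e: "vec_of_mat n Z = vec_of_mat n Z0" unfolding D_def by (rule vec_minus_eq0[OF vom_carrier vom_carrier])
    show ?thesis using vom_inj[OF Z _ e] by (simp add: Z0_def)
  qed
  have "Badj n y = Z0" unfolding Badj_def
    using PZ0 uniq by (intro the_equality) blast+
  thus ?thesis by (simp add: Z0_def)
qed

definition dd :: "nat \<Rightarrow> real mat \<Rightarrow> nat \<Rightarrow> real" where
  "dd n G k = (if k < n * n then 1 - Theta n G $$ (k div n, k mod n) else 1)"

lemma Theta_index: "i < n \<Longrightarrow> j < n \<Longrightarrow> Theta n G $$ (i,j) = (if proj_birkhoff n G $$ (i, j) = 0 then 1 else 0)"
  unfolding Theta_def by simp

lemma dd01: "dd n G k = 0 \<or> dd n G k = 1"
  unfolding dd_def using Theta_index[of "k div n" n "k mod n" G] div_mod_lt[of k n] by auto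

lemma dd_zero: "k < n * n \<Longrightarrow> dd n G k = 0 \<longleftrightarrow> proj_birkhoff n G $$ (k div n, k mod n) = 0"
  unfolding dd_def using Theta_index[of "k div n" n "k mod n" G] div_mod_lt[of k n] by auto

lemma Xi_carrier: "H \<in> carrier_mat n n \<Longrightarrow> Xi n G H \<in> carrier_mat n n"
  unfolding Xi_def by auto

lemma Xi_vom: assumes H: "H \<in> carrier_mat n n"
  shows "vec_of_mat n (Xi n G H) = dv (dd n G) (vec_of_mat n H)"
proof (rule eq_vecI)
  fix k assume "k < dim_vec (dv (dd n G) (vec_of_mat n H))"
  hence k: "k < n * n" by simp
  have dm: "k div n < n" "k mod n < n" using div_mod_lt[OF k] by auto
  show "vec_of_mat n (Xi n G H) $ k = dv (dd n G) (vec_of_mat n H) $ k"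
    using k dm H unfolding Xi_def by (simp add: vom_index dd_def algebra_simps)
qed simp


definition ksl :: "nat \<Rightarrow> real mat \<Rightarrow> nat list" where
  "ksl n G = filter (\<lambda>k. dd n G k = 0) [0..<n*n]"

lemma absset_inst: "absset (n*n) (2*n) (Bmat n) (dd n G) (ksl n G)"
  by unfold_locales (auto simp: ksl_def dd01)

lemma mat_unit: assumes A: "(A::real mat) \<in> carrier_mat m p" and i: "i < m" and j: "j < p"
  shows "(A *\<^sub>v unit_vec p j) $ i = A $$ (i,j)"
  using A i j by (simp add: scalar_prod_right_unit)

context fixes n :: nat and G :: "real mat"
begin

interpretation AS: absset "n*n" "2*n" "Bmat n" "dd n G" "ksl n G" by (rule absset_inst)

lemma L_eq: assumes e: "e \<in> carrier_vec (2 * n)"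
  shows "Bop n (Xi n G (Badj n e)) = (AS.F * AS.F\<^sup>T) *\<^sub>v e"
proof -
  have BT: "(Bmat n)\<^sup>T \<in> carrier_mat (n * n) (2 * n)" by simp
  have bz: "(Bmat n)\<^sup>T *\<^sub>v e \<in> carrier_vec (n * n)" by (rule mult_mat_vec_carrier[OF BT e])
  have F: "AS.F \<in> carrier_mat (2 * n) (n * n)" by (rule AS.F_carrier)
  have FT: "AS.F\<^sup>T \<in> carrier_mat (n * n) (2 * n)" using F by simp
  have M: "mat_of_vec n ((Bmat n)\<^sup>T *\<^sub>v e) \<in> carrier_mat n n" by simp
  have "Bop n (Xi n G (Badj n e)) = Bmat n *\<^sub>v vec_of_mat n (Xi n G (mat_of_vec n ((Bmat n)\<^sup>T *\<^sub>v e)))"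
    using Badj_eq[OF e] Bop_Bmat[OF Xi_carrier[OF M]] by simp
  also have "\<dots> = Bmat n *\<^sub>v dv (dd n G) ((Bmat n)\<^sup>T *\<^sub>v e)"
    using Xi_vom[OF M] vom_mov[OF bz] by simp
  also have "\<dots> = Bmat n *\<^sub>v dv (dd n G) (dv (dd n G) ((Bmat n)\<^sup>T *\<^sub>v e))" by (simp add: AS.dv_idem)
  also have "\<dots> = AS.F *\<^sub>v (dv (dd n G) ((Bmat n)\<^sup>T *\<^sub>v e))" using AS.F_mult[of "dv (dd n G) ((Bmat n)\<^sup>T *\<^sub>v e)"] bz by simp
  also have "\<dots> = AS.F *\<^sub>v (AS.F\<^sup>T *\<^sub>v e)" using AS.FT_mult[OF e] by simp
  also have "\<dots> = (AS.F * AS.F\<^sup>T) *\<^sub>v e" by (rule assoc_mult_mat_vec[OF F FT e, symmetric])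
  finally show ?thesis .
qed

lemma opmat: "op_mat (2*n) (\<lambda>y. Bop n (Xi n G (Badj n y))) = AS.F * AS.F\<^sup>T"
proof -
  have F: "AS.F \<in> carrier_mat (2 * n) (n * n)" by (rule AS.F_carrier)
  have FF: "AS.F * AS.F\<^sup>T \<in> carrier_mat (2 * n) (2 * n)" using F by simp
  show ?thesis
  proof (rule eq_matI)
    fix i j assume i: "i < dim_row (AS.F * AS.F\<^sup>T)" and j: "j < dim_col (AS.F * AS.F\<^sup>T)"
    hence i: "i < 2 * n" and j: "j < 2 * n" using FF by auto
    have "op_mat (2*n) (\<lambda>y. Bop n (Xi n G (Badj n y))) $$ (i,j)
        = Bop n (Xi n G (Badj n (unit_vec (2*n) j))) $ i"
      unfolding op_mat_def using i j by simp
    also have "\<dots> = ((AS.F * AS.F\<^sup>T) *\<^sub>v unit_vec (2*n) j) $ i" using L_eq[of "unit_vec (2*n) j"] by simp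
    also have "\<dots> = (AS.F * AS.F\<^sup>T) $$ (i,j)" by (rule mat_unit[OF FF i j])
    finally show "op_mat (2*n) (\<lambda>y. Bop n (Xi n G (Badj n y))) $$ (i,j) = (AS.F * AS.F\<^sup>T) $$ (i,j)" .
  qed (use FF in \<open>auto simp: op_mat_def\<close>)
qed

lemma Pop_vom: assumes H: "H \<in> carrier_mat n n"
  shows "vec_of_mat n (Pop n G H) = dv (dd n G) (vec_of_mat n H)
     - dv (dd n G) ((Bmat n)\<^sup>T *\<^sub>v (pinv (AS.F * AS.F\<^sup>T) *\<^sub>v (AS.F *\<^sub>v vec_of_mat n H)))"
proof -
  have F: "AS.F \<in> carrier_mat (2 * n) (n * n)" by (rule AS.F_carrier)
  have FF: "AS.F * AS.F\<^sup>T \<in> carrier_mat (2 * n) (2 * n)" using F by simp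
  have pF: "pinv (AS.F * AS.F\<^sup>T) \<in> carrier_mat (2 * n) (2 * n)"
    using pinv_penrose[OF FF] F by (simp add: penrose_def)
  define z where "z = pinv (AS.F * AS.F\<^sup>T) *\<^sub>v (AS.F *\<^sub>v vec_of_mat n H)"
  have z: "z \<in> carrier_vec (2 * n)" unfolding z_def using pF F by simp
  have BT: "(Bmat n)\<^sup>T \<in> carrier_mat (n * n) (2 * n)" by simp
  have bz: "(Bmat n)\<^sup>T *\<^sub>v z \<in> carrier_vec (n * n)" by (rule mult_mat_vec_carrier[OF BT z])
  have XH: "Xi n G H \<in> carrier_mat n n" by (rule Xi_carrier[OF H])
  have "Bop n (Xi n G H) = Bmat n *\<^sub>v dv (dd n G) (vec_of_mat n H)"
    using Bop_Bmat[OF XH] Xi_vom[OF H] by simp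
  also have "\<dots> = AS.F *\<^sub>v vec_of_mat n H" using AS.F_mult[of "vec_of_mat n H"] by simp
  finally have "op_pinv (2 * n) (\<lambda>y. Bop n (Xi n G (Badj n y))) (Bop n (Xi n G H)) = z"
    unfolding op_pinv_def opmat z_def by simp
  hence "Pop n G H = Xi n G H - Xi n G (mat_of_vec n ((Bmat n)\<^sup>T *\<^sub>v z))"
    unfolding Pop_def using Badj_eq[OF z] by simp
  hence "vec_of_mat n (Pop n G H) = vec_of_mat n (Xi n G H) - vec_of_mat n (Xi n G (mat_of_vec n ((Bmat n)\<^sup>T *\<^sub>v z)))"
    using vom_minus[OF XH Xi_carrier[OF mov_carrier]] by simp
  also have "\<dots> = dv (dd n G) (vec_of_mat n H) - dv (dd n G) ((Bmat n)\<^sup>T *\<^sub>v z)"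
    using Xi_vom[OF H] Xi_vom[OF mov_carrier] vom_mov[OF bz] by simp
  finally show ?thesis unfolding z_def .
qed

lemma Pop_carrier: "H \<in> carrier_mat n n \<Longrightarrow> Pop n G H \<in> carrier_mat n n"
  unfolding Pop_def Xi_def by auto

end


definition Pset :: "nat \<Rightarrow> real vec set" where
  "Pset n = polyhedron (1\<^sub>m (n*n)) (0\<^sub>v (n*n)) (Bmat n) (ones (2*n))"

lemma Bop_ones: assumes X: "X \<in> carrier_mat n n"
  shows "Bop n X = ones (2*n) \<longleftrightarrow> X *\<^sub>v ones n = ones n \<and> X\<^sup>T *\<^sub>v ones n = ones n"
proof
  assume B: "Bop n X = ones (2*n)"
  have "X *\<^sub>v ones n = ones n"
  proof (rule eq_vecI)
    fix i assume "i < dim_vec (ones n)"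
    hence i: "i < n" by (simp add: ones_def)
    have "Bop n X $ i = 1" using B i by (simp add: ones_def)
    thus "(X *\<^sub>v ones n) $ i = ones n $ i" using Bop_idx1[OF X i] i by (simp add: ones_def)
  qed (use X in \<open>simp add: ones_def\<close>)
  moreover have "X\<^sup>T *\<^sub>v ones n = ones n"
  proof (rule eq_vecI)
    fix i assume "i < dim_vec (ones n)"
    hence i: "i < n" by (simp add: ones_def)
    have "Bop n X $ (n + i) = 1" using B i by (simp add: ones_def)
    thus "(X\<^sup>T *\<^sub>v ones n) $ i = ones n $ i" using Bop_idx2[OF X i] i by (simp add: ones_def)
  qed (use X in \<open>simp add: ones_def\<close>)
  ultimately show "X *\<^sub>v ones n = ones n \<and> X\<^sup>T *\<^sub>v ones n = ones n" ..
next
  assume A: "X *\<^sub>v ones n = ones n \<and> X\<^sup>T *\<^sub>v ones n = ones n"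
  show "Bop n X = ones (2*n)"
  proof (rule eq_vecI)
    fix r assume "r < dim_vec (ones (2*n))"
    hence r: "r < 2 * n" by (simp add: ones_def)
    show "Bop n X $ r = ones (2*n) $ r"
    proof (cases "r < n")
      case True
      thus ?thesis using Bop_idx1[OF X True] A r by (simp add: ones_def)
    next
      case False
      hence rn: "r - n < n" and rr: "n + (r - n) = r" using r by auto
      have "Bop n X $ (n + (r - n)) = 1" using Bop_idx2[OF X rn] A rn by (simp add: ones_def)
      thus ?thesis using rr r by (simp add: ones_def)
    qed
  qed (use Bop_dim[OF X] in \<open>simp add: ones_def\<close>)
qed

lemma Pset_char: "y \<in> Pset n \<longleftrightarrow> y \<in> carrier_vec (n*n) \<and> mat_of_vec n y \<in> birkhoff n"
proof -
  have nonneg: "(\<forall>i<n*n. y $ i \<ge> 0) \<longleftrightarrow> (\<forall>i<n. \<forall>j<n. mat_of_vec n y $$ (i,j) \<ge> 0)"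
  proof
    assume "\<forall>i<n*n. y $ i \<ge> 0" thus "\<forall>i<n. \<forall>j<n. mat_of_vec n y $$ (i,j) \<ge> 0" using idx_lt by simp
  next
    assume a: "\<forall>i<n. \<forall>j<n. mat_of_vec n y $$ (i,j) \<ge> 0"
    show "\<forall>i<n*n. y $ i \<ge> 0"
    proof (intro allI impI)
      fix k assume k: "k < n * n"
      have dm: "k div n < n" "k mod n < n" using div_mod_lt[OF k] by auto
      have "k div n * n + k mod n = k" by simp
      thus "y $ k \<ge> 0" using a dm by (metis mov_index)
    qed
  qed
  show ?thesis
  proof (cases "y \<in> carrier_vec (n*n)")
    case True
    have "Bmat n *\<^sub>v y = Bop n (mat_of_vec n y)" using Bop_Bmat[OF mov_carrier] vom_mov[OF True] by simp
    thus ?thesis using True nonneg Bop_ones[OF mov_carrier, of n y]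
      unfolding Pset_def polyhedron_def birkhoff_def by (auto simp: row_one scalar_prod_left_unit)
  next
    case False thus ?thesis unfolding Pset_def polyhedron_def by auto
  qed
qed

lemma birk_le1: assumes M: "M \<in> birkhoff n" and i: "i < n" and j: "j < n"
  shows "M $$ (i,j) \<le> 1"
proof -
  have Mc: "M \<in> carrier_mat n n" using M by (simp add: birkhoff_def)
  have "(\<Sum>j<n. M $$ (i,j)) = 1" using M i Ones_idx1[OF Mc i] by (simp add: birkhoff_def ones_def)
  moreover have "M $$ (i,j) \<le> (\<Sum>j<n. M $$ (i,j))"
    by (rule member_le_sum) (use M i j in \<open>auto simp: birkhoff_def\<close>)
  ultimately show ?thesis by simp
qed

lemma M0_birk: "mat n n (\<lambda>_. 1 / real n) \<in> birkhoff n"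
proof -
  define M0 :: "real mat" where "M0 = mat n n (\<lambda>_. 1 / real n)"
  have Mc: "M0 \<in> carrier_mat n n" unfolding M0_def by simp
  have "M0 *\<^sub>v ones n = ones n"
  proof (rule eq_vecI)
    fix i assume "i < dim_vec (ones n)"
    hence i: "i < n" by (simp add: ones_def)
    have "(M0 *\<^sub>v ones n) $ i = (\<Sum>j<n. M0 $$ (i,j))" by (rule Ones_idx1[OF Mc i])
    also have "\<dots> = 1" using i by (simp add: M0_def)
    finally show "(M0 *\<^sub>v ones n) $ i = ones n $ i" using i by (simp add: ones_def)
  qed (use Mc in \<open>simp add: ones_def\<close>)
  moreover have "M0\<^sup>T *\<^sub>v ones n = ones n"
  proof (rule eq_vecI)
    fix i assume "i < dim_vec (ones n)"
    hence i: "i < n" by (simp add: ones_def)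
    have "(M0\<^sup>T *\<^sub>v ones n) $ i = (\<Sum>j<n. M0 $$ (j,i))" by (rule Ones_idx2[OF Mc i])
    also have "\<dots> = 1" using i by (simp add: M0_def)
    finally show "(M0\<^sup>T *\<^sub>v ones n) $ i = ones n $ i" using i by (simp add: ones_def)
  qed (use Mc in \<open>simp add: ones_def\<close>)
  ultimately show ?thesis using Mc unfolding birkhoff_def M0_def[symmetric] by (auto simp: M0_def)
qed

lemma dist_sum: assumes "(x::real vec) \<in> carrier_vec N" "y \<in> carrier_vec N"
  shows "(x - y) \<bullet> (x - y) = (\<Sum>k<N. (x $ k - y $ k)^2)"
  using assms unfolding scalar_prod_def by (simp add: atLeast0LessThan power2_eq_square)

lemma Pset_carrier: "y \<in> Pset n \<Longrightarrow> y \<in> carrier_vec (n*n)"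
  using Pset_char by blast

lemma Pset_nonneg: "y \<in> Pset n \<Longrightarrow> k < n * n \<Longrightarrow> y $ k \<ge> 0"
  unfolding Pset_def polyhedron_def by (auto simp: row_one scalar_prod_left_unit)

lemma Pset_le1: assumes y: "y \<in> Pset n" and k: "k < n * n" shows "y $ k \<le> 1"
proof -
  have dm: "k div n < n" "k mod n < n" using div_mod_lt[OF k] by auto
  have "mat_of_vec n y $$ (k div n, k mod n) \<le> 1"
    using birk_le1[OF _ dm] y Pset_char by blast
  moreover have "k div n * n + k mod n = k" by simp
  ultimately show ?thesis using dm by (metis mov_index)
qed

lemma Pset_B: "y \<in> Pset n \<Longrightarrow> Bmat n *\<^sub>v y = ones (2*n)"
  unfolding Pset_def polyhedron_def by auto

lemma Pset_I: assumes "y \<in> carrier_vec (n*n)" "\<And>k. k < n * n \<Longrightarrow> y $ k \<ge> 0" "Bmat n *\<^sub>v y = ones (2*n)"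
  shows "y \<in> Pset n"
  using assms unfolding Pset_def polyhedron_def by (auto simp: row_one scalar_prod_left_unit)

lemma proj_exists_vec:
  assumes x: "x \<in> carrier_vec (n*n)"
  shows "\<exists>y\<in>Pset n. \<forall>z\<in>Pset n. (x - y) \<bullet> (x - y) \<le> (x - z) \<bullet> (x - z)"
proof -
  define N where "N = n * n"
  define X where "X = product_topology (\<lambda>_::nat. euclideanreal) {..<N}"
  define g where "g r f = (\<Sum>k<N. Bmat n $$ (r,k) * f k)" for r and f :: "nat \<Rightarrow> real"
  define h where "h f = (\<Sum>r<2*n. (g r f - 1)^2)" for f :: "nat \<Rightarrow> real"
  define \<phi> where "\<phi> f = (\<Sum>k<N. (x $ k - f k)^2)" for f :: "nat \<Rightarrow> real"
  define S where "S = PiE {..<N} (\<lambda>_. {0..1::real})"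
  define T where "T = {f \<in> topspace X. h f \<in> {0}}"
  define K where "K = S \<inter> T"
  have contg: "continuous_map X euclideanreal (g r)" for r
    unfolding X_def g_def by (intro continuous_intros) auto
  have conth: "continuous_map X euclideanreal h"
    unfolding h_def by (intro continuous_intros contg) auto
  have contphi: "continuous_map X euclideanreal \<phi>"
    unfolding X_def \<phi>_def by (intro continuous_intros) auto
  have cS: "compactin X S" unfolding X_def S_def
    by (subst compactin_PiE) auto
  have cT: "closedin X T" unfolding T_def
    by (rule closedin_continuous_map_preimage[OF conth]) simp
  have cK: "compactin X K" unfolding K_def by (rule compact_Int_closedin[OF cS cT])
  have cimg: "compact (\<phi> ` K)" using image_compactin[OF cK contphi] by simp
  define fz where "fz z = restrict (\<lambda>k. z $ k) {..<N}" for z :: "real vec"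
  have Bg: "(Bmat n *\<^sub>v vec N f) $ r = g r f" if r: "r < 2 * n" for r f
    using r unfolding g_def N_def by (simp add: scalar_prod_def atLeast0LessThan)
  have gfz: "g r (fz z) = g r (\<lambda>k. z $ k)" for r z unfolding g_def fz_def by simp
  have vfz: "vec N (\<lambda>k. z $ k) = z" if "z \<in> carrier_vec N" for z using that by (intro eq_vecI) auto
  have fzK: "fz z \<in> K" and phifz: "\<phi> (fz z) = (x - z) \<bullet> (x - z)" if z: "z \<in> Pset n" for z
  proof -
    have zc: "z \<in> carrier_vec N" using Pset_carrier[OF z] by (simp add: N_def)
    have "fz z \<in> S" unfolding S_def fz_def using Pset_nonneg[OF z] Pset_le1[OF z]
      by (auto simp: N_def)
    moreover have "fz z \<in> topspace X" unfolding X_def fz_def by simp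
    moreover have "h (fz z) = 0"
    proof -
      have "g r (fz z) = 1" if r: "r < 2 * n" for r
      proof -
        have "g r (fz z) = (Bmat n *\<^sub>v vec N (\<lambda>k. z $ k)) $ r" using Bg[OF r] gfz by simp
        also have "\<dots> = (Bmat n *\<^sub>v z) $ r" using vfz[OF zc] by simp
        also have "\<dots> = 1" using Pset_B[OF z] r by (simp add: ones_def)
        finally show ?thesis .
      qed
      thus ?thesis unfolding h_def by simp
    qed
    ultimately show "fz z \<in> K" unfolding K_def T_def by simp
    show "\<phi> (fz z) = (x - z) \<bullet> (x - z)" unfolding \<phi>_def fz_def
      using dist_sum[OF _ zc, of x] x by (simp add: N_def)
  qed
  have z0: "vec_of_mat n (mat n n (\<lambda>_. 1 / real n)) \<in> Pset n"
    unfolding Pset_char using M0_birk mov_vom[of "mat n n (\<lambda>_. 1 / real n)" n] by simp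
  hence ne: "\<phi> ` K \<noteq> {}" using fzK by blast
  obtain s where s: "s \<in> \<phi> ` K" and smin: "\<forall>t\<in>\<phi> ` K. s \<le> t"
    using compact_attains_inf[OF cimg ne] by blast
  obtain f where f: "f \<in> K" and sf: "s = \<phi> f" using s by blast
  define y where "y = vec N f"
  have yc: "y \<in> carrier_vec (n*n)" unfolding y_def N_def by simp
  have fS: "f \<in> S" and hf: "h f = 0" using f unfolding K_def T_def by auto
  have "(g r f - 1)^2 = 0" if "r < 2 * n" for r
  proof -
    have "(\<Sum>r<2*n. (g r f - 1)^2) = 0" using hf unfolding h_def .
    thus ?thesis using that by (subst (asm) sum_nonneg_eq_0_iff) auto
  qed
  hence g1: "g r f = 1" if "r < 2 * n" for r using that by simp
  have yP: "y \<in> Pset n"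
  proof (rule Pset_I[OF yc])
    fix k assume "k < n * n" thus "y $ k \<ge> 0" using fS unfolding y_def S_def N_def by (auto simp: PiE_iff)
  next
    show "Bmat n *\<^sub>v y = ones (2 * n)"
    proof (rule eq_vecI)
      fix r assume "r < dim_vec (ones (2 * n))"
      hence r: "r < 2 * n" by (simp add: ones_def)
      have "(Bmat n *\<^sub>v y) $ r = g r f" unfolding y_def by (rule Bg[OF r])
      thus "(Bmat n *\<^sub>v y) $ r = ones (2 * n) $ r" using g1[OF r] r by (simp add: ones_def)
    qed (simp add: ones_def)
  qed
  have phiy: "\<phi> f = (x - y) \<bullet> (x - y)" unfolding \<phi>_def y_def
    using dist_sum[of x N "vec N f"] x by (simp add: N_def)
  show ?thesis
  proof (intro bexI[OF _ yP] ballI)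
    fix z assume z: "z \<in> Pset n"
    have "s \<le> \<phi> (fz z)" using smin fzK[OF z] by blast
    thus "(x - y) \<bullet> (x - y) \<le> (x - z) \<bullet> (x - z)" using sf phiy phifz[OF z] by simp
  qed
qed

lemma proj_unique_vec:
  assumes x: "x \<in> carrier_vec (n*n)" and y1: "y1 \<in> Pset n" and y2: "y2 \<in> Pset n"
    and m1: "\<forall>z\<in>Pset n. (x - y1) \<bullet> (x - y1) \<le> (x - z) \<bullet> (x - z)"
    and m2: "\<forall>z\<in>Pset n. (x - y2) \<bullet> (x - y2) \<le> (x - z) \<bullet> (x - z)"
  shows "y1 = y2"
proof -
  define N where "N = n * n"
  have c1: "y1 \<in> carrier_vec N" and c2: "y2 \<in> carrier_vec N" using y1 y2 Pset_carrier unfolding N_def by auto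
  have xc: "x \<in> carrier_vec N" using x unfolding N_def .
  define m where "m = (1/2) \<cdot>\<^sub>v (y1 + y2)"
  have mc: "m \<in> carrier_vec N" unfolding m_def using c1 c2 by simp
  have mk: "m $ k = (y1 $ k + y2 $ k) / 2" if "k < N" for k using that c1 c2 unfolding m_def by simp
  have mP: "m \<in> Pset n"
  proof (rule Pset_I)
    show "m \<in> carrier_vec (n*n)" using mc unfolding N_def .
    fix k assume k: "k < n * n"
    have "y1 $ k \<ge> 0" "y2 $ k \<ge> 0" using Pset_nonneg[OF y1 k] Pset_nonneg[OF y2 k] by auto
    thus "m $ k \<ge> 0" using mk[of k] k unfolding N_def by simp
  next
    have B: "Bmat n \<in> carrier_mat (2*n) N" unfolding N_def by simp
    have "Bmat n *\<^sub>v m = (1/2) \<cdot>\<^sub>v (Bmat n *\<^sub>v (y1 + y2))" unfolding m_def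
      by (rule mult_mat_vec[OF B]) (use c1 c2 in simp)
    also have "Bmat n *\<^sub>v (y1 + y2) = Bmat n *\<^sub>v y1 + Bmat n *\<^sub>v y2" by (rule mult_add_distrib_mat_vec[OF B c1 c2])
    finally show "Bmat n *\<^sub>v m = ones (2 * n)" using Pset_B[OF y1] Pset_B[OF y2]
      by (intro eq_vecI) (auto simp: ones_def)
  qed
  define D1 where "D1 = (\<Sum>k<N. (x $ k - y1 $ k)^2)"
  define D2 where "D2 = (\<Sum>k<N. (x $ k - y2 $ k)^2)"
  define Dm where "Dm = (\<Sum>k<N. (x $ k - m $ k)^2)"
  define E where "E = (\<Sum>k<N. (y1 $ k - y2 $ k)^2)"
  have d1: "(x - y1) \<bullet> (x - y1) = D1" unfolding D1_def by (rule dist_sum[OF xc c1])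
  have d2: "(x - y2) \<bullet> (x - y2) = D2" unfolding D2_def by (rule dist_sum[OF xc c2])
  have dm: "(x - m) \<bullet> (x - m) = Dm" unfolding Dm_def by (rule dist_sum[OF xc mc])
  have "Dm = (\<Sum>k<N. (x $ k - y1 $ k)^2 / 2 + (x $ k - y2 $ k)^2 / 2 - (y1 $ k - y2 $ k)^2 / 4)"
    unfolding Dm_def by (intro sum.cong refl) (simp add: mk power2_eq_square field_simps)
  also have "\<dots> = D1 / 2 + D2 / 2 - E / 4"
    unfolding D1_def D2_def E_def by (simp add: sum.distrib sum_subtractf sum_divide_distrib)
  finally have Dmeq: "Dm = D1 / 2 + D2 / 2 - E / 4" .
  have "D1 \<le> Dm" "D2 \<le> Dm" "D1 \<le> D2" "D2 \<le> D1" using m1 m2 mP y1 y2 d1 d2 dm by force+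
  hence "E \<le> 0" using Dmeq by simp
  moreover have "E \<ge> 0" unfolding E_def by (intro sum_nonneg) simp
  ultimately have "E = 0" by simp
  hence "\<forall>k\<in>{..<N}. (y1 $ k - y2 $ k)^2 = 0" unfolding E_def by (subst (asm) sum_nonneg_eq_0_iff) auto
  thus ?thesis using c1 c2 by (intro eq_vecI) auto
qed

lemma euclid_proj_prop: assumes x: "x \<in> carrier_vec (n*n)"
  shows "euclid_proj (Pset n) x \<in> Pset n \<and>
    (\<forall>z\<in>Pset n. (x - euclid_proj (Pset n) x) \<bullet> (x - euclid_proj (Pset n) x) \<le> (x - z) \<bullet> (x - z))"
proof -
  have "\<exists>!y. y \<in> Pset n \<and> (\<forall>z\<in>Pset n. (x - y) \<bullet> (x - y) \<le> (x - z) \<bullet> (x - z))"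
    using proj_exists_vec[OF x] proj_unique_vec[OF x] by blast
  thus ?thesis unfolding euclid_proj_def by (rule theI')
qed

lemma frob_dist: assumes G: "G \<in> carrier_mat n n" and Z: "Z \<in> carrier_mat n n"
  shows "frob_inner (G - Z) (G - Z) = (vec_of_mat n G - vec_of_mat n Z) \<bullet> (vec_of_mat n G - vec_of_mat n Z)"
proof -
  have "G - Z \<in> carrier_mat n n" using minus_carrier_mat[OF Z, of G] by simp
  thus ?thesis using frob_vom[of "G - Z" n "G - Z"] vom_minus[OF G Z] by simp
qed

lemma proj_main: assumes G: "G \<in> carrier_mat n n"
  shows "euclid_proj (Pset n) (vec_of_mat n G) = vec_of_mat n (proj_birkhoff n G)"
proof -
  define x where "x = vec_of_mat n G"
  have x: "x \<in> carrier_vec (n*n)" unfolding x_def by simp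
  define p where "p = euclid_proj (Pset n) x"
  have pP: "p \<in> Pset n" and pmin: "\<forall>z\<in>Pset n. (x - p) \<bullet> (x - p) \<le> (x - z) \<bullet> (x - z)"
    using euclid_proj_prop[OF x] unfolding p_def by auto
  have pc: "p \<in> carrier_vec (n*n)" using Pset_carrier[OF pP] .
  have birkP: "Z \<in> birkhoff n \<longleftrightarrow> Z \<in> carrier_mat n n \<and> vec_of_mat n Z \<in> Pset n" for Z
    using Pset_char[of "vec_of_mat n Z" n] mov_vom[of Z n] by (auto simp: birkhoff_def)
  have "proj_birkhoff n G = mat_of_vec n p" unfolding proj_birkhoff_def
  proof (rule the_equality)
    have Y0: "mat_of_vec n p \<in> birkhoff n" using Pset_char pP by blast
    show "mat_of_vec n p \<in> birkhoff n \<and>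
      (\<forall>Z\<in>birkhoff n. frob_inner (G - mat_of_vec n p) (G - mat_of_vec n p) \<le> frob_inner (G - Z) (G - Z))"
    proof (intro conjI Y0 ballI)
      fix Z assume Z: "Z \<in> birkhoff n"
      have Zc: "Z \<in> carrier_mat n n" and ZP: "vec_of_mat n Z \<in> Pset n" using birkP Z by auto
      show "frob_inner (G - mat_of_vec n p) (G - mat_of_vec n p) \<le> frob_inner (G - Z) (G - Z)"
        using frob_dist[OF G Zc] frob_dist[OF G mov_carrier, of p] vom_mov[OF pc] pmin ZP
        unfolding x_def by simp
    qed
  next
    fix Y assume Y: "Y \<in> birkhoff n \<and> (\<forall>Z\<in>birkhoff n. frob_inner (G - Y) (G - Y) \<le> frob_inner (G - Z) (G - Z))"
    have Yc: "Y \<in> carrier_mat n n" and YP: "vec_of_mat n Y \<in> Pset n" using birkP Y by auto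
    have "\<forall>z\<in>Pset n. (x - vec_of_mat n Y) \<bullet> (x - vec_of_mat n Y) \<le> (x - z) \<bullet> (x - z)"
    proof
      fix z assume z: "z \<in> Pset n"
      have zc: "z \<in> carrier_vec (n*n)" using Pset_carrier[OF z] .
      have "mat_of_vec n z \<in> birkhoff n" using Pset_char z by blast
      hence "frob_inner (G - Y) (G - Y) \<le> frob_inner (G - mat_of_vec n z) (G - mat_of_vec n z)" using Y by blast
      thus "(x - vec_of_mat n Y) \<bullet> (x - vec_of_mat n Y) \<le> (x - z) \<bullet> (x - z)"
        using frob_dist[OF G Yc] frob_dist[OF G mov_carrier, of z] vom_mov[OF zc] unfolding x_def by simp
    qed
    hence "vec_of_mat n Y = p" using proj_unique_vec[OF x YP pP _ pmin] by simp
    thus "Y = mat_of_vec n p" using mov_vom[OF Yc] by simp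
  qed
  thus ?thesis using vom_mov[OF pc] unfolding p_def x_def by simp
qed


theorem proposition3p1:
  fixes n :: nat and G :: "real mat"
  assumes "G \<in> carrier_mat n n"
  shows "(\<forall>H\<in>carrier_mat n n.
            vec_of_mat n (Pop n G H) =
            hs_jacobian (1\<^sub>m (n * n)) (0\<^sub>v (n * n)) (Bmat n) (ones (2 * n)) (vec_of_mat n G)
              *\<^sub>v vec_of_mat n H)
       \<and> (\<forall>H\<in>carrier_mat n n. \<forall>K\<in>carrier_mat n n.
            frob_inner (Pop n G H) K = frob_inner H (Pop n G K))
       \<and> (\<forall>H\<in>carrier_mat n n. frob_inner (Pop n G H) H \<ge> 0)"
proof -
  note Gc = assms
  interpret AS: absset "n*n" "2*n" "Bmat n" "dd n G" "ksl n G" by (rule absset_inst)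
  define p where "p = vec_of_mat n (proj_birkhoff n G)"
  have pc: "p \<in> carrier_vec (n*n)" unfolding p_def by simp
  have act: "active_set (1\<^sub>m (n * n)) (0\<^sub>v (n * n)) (Bmat n) (ones (2 * n)) (vec_of_mat n G)
      = {i. i < n * n \<and> dd n G i = 0}"
  proof -
    have ep: "euclid_proj (polyhedron (1\<^sub>m (n * n)) (0\<^sub>v (n * n)) (Bmat n) (ones (2 * n))) (vec_of_mat n G) = p"
      using proj_main[OF Gc] unfolding Pset_def p_def .
    have "i < n * n \<Longrightarrow> (row (1\<^sub>m (n * n)) i \<bullet> p = 0\<^sub>v (n * n) $ i) \<longleftrightarrow> dd n G i = 0" for i
      using pc dd_zero[of i n G] by (simp add: row_one scalar_prod_left_unit p_def vom_index)
    thus ?thesis unfolding active_set_def ep by auto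
  qed
  have hs: "hs_jacobian (1\<^sub>m (n * n)) (0\<^sub>v (n * n)) (Bmat n) (ones (2 * n)) (vec_of_mat n G)
      = 1\<^sub>m (n*n) - AS.C\<^sup>T * pinv (AS.C * AS.C\<^sup>T) * AS.C"
  proof -
    have fl: "filter (\<lambda>i. i \<in> active_set (1\<^sub>m (n * n)) (0\<^sub>v (n * n)) (Bmat n) (ones (2 * n)) (vec_of_mat n G)) [0..<n*n]
        = ksl n G" unfolding act ksl_def by (intro filter_cong) auto
    have mp: "map (row (1\<^sub>m (n * n))) (ksl n G) = map (unit_vec (n*n)) (ksl n G)"
      by (intro map_cong refl) (auto simp: ksl_def row_one)
    show ?thesis unfolding hs_jacobian_def Let_def AS.C_def by (simp add: fl mp)
  qed
  have PopH: "vec_of_mat n (Pop n G H) = dv (dd n G) (vec_of_mat n H)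
     - dv (dd n G) ((Bmat n)\<^sup>T *\<^sub>v (pinv (AS.F * AS.F\<^sup>T) *\<^sub>v (AS.F *\<^sub>v vec_of_mat n H)))"
    if "H \<in> carrier_mat n n" for H :: "real mat" by (rule Pop_vom[OF that])
  have inV: "AS.inV (vec_of_mat n (Pop n G H))"
    and orth: "\<And>v. AS.inV v \<Longrightarrow> (vec_of_mat n H - vec_of_mat n (Pop n G H)) \<bullet> v = 0"
    and eqH: "hs_jacobian (1\<^sub>m (n * n)) (0\<^sub>v (n * n)) (Bmat n) (ones (2 * n)) (vec_of_mat n G)
              *\<^sub>v vec_of_mat n H = vec_of_mat n (Pop n G H)"
    if H: "H \<in> carrier_mat n n" for H :: "real mat"
    using AS.main_abs[OF vom_carrier[of n H]] PopH[OF H] hs by simp_all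
  show ?thesis
  proof (intro conjI ballI)
    fix H :: "real mat" assume H: "H \<in> carrier_mat n n"
    show "vec_of_mat n (Pop n G H) =
       hs_jacobian (1\<^sub>m (n * n)) (0\<^sub>v (n * n)) (Bmat n) (ones (2 * n)) (vec_of_mat n G) *\<^sub>v vec_of_mat n H"
      using eqH[OF H] by simp
    show "frob_inner (Pop n G H) H \<ge> 0"
      using AS.sa_psd(2)[OF vom_carrier vom_carrier inV[OF H] inV[OF H] orth[OF H] orth[OF H]]
        frob_vom[OF Pop_carrier[OF H]] by simp
  next
    fix H K :: "real mat" assume H: "H \<in> carrier_mat n n" and K: "K \<in> carrier_mat n n"
    show "frob_inner (Pop n G H) K = frob_inner H (Pop n G K)"
      using AS.sa_psd(1)[OF vom_carrier vom_carrier inV[OF H] inV[OF K] orth[OF H] orth[OF K]]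
        frob_vom[OF Pop_carrier[OF H]] frob_vom[OF H] by simp
  qed
qed


end
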